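(* For every wqo $A$ there exists $m\in\mathbb{N}$ such that $$1+\mathbf{h}(A)\;\le\;\mathbf{h}(\mathcal{P}_f(A))\;\le\;\begin{cases}2^{\mathbf{h}(A)} & \text{if } \mathbf{h}(A) \text{ is a limit ordinal},\\ 2^{\mathbf{h}(A)}\cdot m & \text{if } \mathbf{h}(A)\text{ is a successor ordinal.}\end{cases}$$
   Context: A quasi-order $(A,\le)$ is a well-quasi-order (wqo) if every infinite sequence $x_0,x_1,\dots$ in $A$ has indices $i<j$ with $x_i\le x_j$. For a wqo $A$, let $\mathrm{Bad}(A)$, $\mathrm{Dec}(A)$, $\mathrm{Inco}(A)$ be the trees of finite bad sequences (sequences with no $i<j$, $x_i\le x_j$), finite strictly decreasing sequences, and finite sequences of pairwise incomparable elements of $A$, respectively; the root is the empty sequence and the children of a sequence are its one-element extensions. These trees are well-founded; the rank of a node $s$ is $r(s)=\sup\{r(t)+1 : t \text{ a child of } s\}$. The maximal order type $\mathbf{o}(A)$, height $\mathbf{h}(A)$ and width $\mathbf{w}(A)$ are the ranks of the roots of $\mathrm{Bad}(A)$, $\mathrm{Dec}(A)$, $\mathrm{Inco}(A)$ respectively. $\mathcal{P}_f(A)$ denotes the set of finite subsets of $A$ ordered by the Hoare embedding: $S\le_H S'$ iff for every $a\in S$ there is $b\in S'$ with $a\le b$. Ordinal arithmetic (sum, product, exponentiation) is the usual one. *)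

theory Defs
  imports Main
begin

definition qo_on :: "'a set \<Rightarrow> ('a \<Rightarrow> 'a \<Rightarrow> bool) \<Rightarrow> bool" where
  "qo_on A le \<longleftrightarrow> (\<forall>x\<in>A. le x x) \<and> (\<forall>x\<in>A. \<forall>y\<in>A. \<forall>z\<in>A. le x y \<longrightarrow> le y z \<longrightarrow> le x z)"

definition wqo_on :: "'a set \<Rightarrow> ('a \<Rightarrow> 'a \<Rightarrow> bool) \<Rightarrow> bool" where
  "wqo_on A le \<longleftrightarrow> qo_on A le \<and>
     (\<forall>f :: nat \<Rightarrow> 'a. (\<forall>i. f i \<in> A) \<longrightarrow> (\<exists>i j. i < j \<and> le (f i) (f j)))"

definition strict :: "('a \<Rightarrow> 'a \<Rightarrow> bool) \<Rightarrow> 'a \<Rightarrow> 'a \<Rightarrow> bool" where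
  "strict le x y \<longleftrightarrow> le x y \<and> \<not> le y x"

definition Dec :: "'a set \<Rightarrow> ('a \<Rightarrow> 'a \<Rightarrow> bool) \<Rightarrow> 'a list set" where
  "Dec A le = {xs. set xs \<subseteq> A \<and> (\<forall>i j. i < j \<and> j < length xs \<longrightarrow> strict le (xs ! j) (xs ! i))}"

definition Pf :: "'a set \<Rightarrow> 'a set set" where
  "Pf A = {S. finite S \<and> S \<subseteq> A}"

definition hoare :: "('a \<Rightarrow> 'a \<Rightarrow> bool) \<Rightarrow> 'a set \<Rightarrow> 'a set \<Rightarrow> bool" where
  "hoare le S S' \<longleftrightarrow> (\<forall>a\<in>S. \<exists>b\<in>S'. le a b)"

text \<open>Ordinals are represented by well-order relations and compared with the library
  relation \<le>o.  Ranks of nodes of trees with node labels of type 'n are computed inside a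
  fixed well-order that is large enough (the successor cardinal of the set of all nodes).\<close>

definition bigW :: "'n list set rel" where
  "bigW = cardSuc (card_of (UNIV :: 'n list set))"

definition tree_child :: "'n list set \<Rightarrow> ('n list \<times> 'n list) set" where
  "tree_child T = {(s @ [x], s) | s x. s \<in> T \<and> s @ [x] \<in> T}"

text \<open>r(s) = sup { r(t) + 1 : t child of s }, i.e. the least element strictly above all r(t).\<close>
definition tree_rank :: "'n list set \<Rightarrow> 'n list \<Rightarrow> 'n list set" where
  "tree_rank T = wfrec (tree_child T)
     (\<lambda>f s. wo_rel.suc bigW (f ` {t. (t, s) \<in> tree_child T}))"

text \<open>The rank of the root (the empty sequence) as an ordinal: the initial segment of bigW
  strictly below that element.\<close>
definition tree_height :: "'n list set \<Rightarrow> 'n list set rel" where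
  "tree_height T = Restr bigW (underS bigW (tree_rank T []))"

definition height :: "'a set \<Rightarrow> ('a \<Rightarrow> 'a \<Rightarrow> bool) \<Rightarrow> 'a list set rel" where
  "height A le = tree_height (Dec A le)"

definition one_plus :: "'a rel \<Rightarrow> 'a option rel" where
  "one_plus r = {(None, None)} \<union> {(None, Some b) | b. b \<in> Field r}
                \<union> {(Some a, Some b) | a b. (a, b) \<in> r}"

text \<open>2^alpha: finite subsets of alpha, compared at the largest element of the symmetric
  difference (finite-support functions alpha \<rightarrow> 2, anti-lexicographically).\<close>
definition two_pow :: "'a rel \<Rightarrow> 'a set rel" where
  "two_pow r = {(S, T). finite S \<and> S \<subseteq> Field r \<and> finite T \<and> T \<subseteq> Field r \<and>
      (S = T \<or> (\<exists>x \<in> T - S. \<forall>y \<in> (S - T) \<union> (T - S). (y, x) \<in> r))}"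

text \<open>alpha * m for m natural: m consecutive copies of alpha.\<close>
definition times_nat :: "'a rel \<Rightarrow> nat \<Rightarrow> (nat \<times> 'a) rel" where
  "times_nat r m = {((i, a), (j, b)) | i j a b. i < m \<and> j < m \<and> a \<in> Field r \<and> b \<in> Field r \<and>
      (i < j \<or> (i = j \<and> (a, b) \<in> r))}"

definition is_successor_ord :: "'a rel \<Rightarrow> bool" where
  "is_successor_ord r \<longleftrightarrow> (\<exists>a \<in> Field r. \<forall>b \<in> Field r. (b, a) \<in> r)"

definition is_limit_ord :: "'a rel \<Rightarrow> bool" where
  "is_limit_ord r \<longleftrightarrow> Field r \<noteq> {} \<and> \<not> is_successor_ord r"

end

theory Submission
  imports Defs "HOL-Library.Multiset"
begin

unbundle cardinal_syntax


lemma WO_D: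
  assumes "Well_order r"
  shows "trans r" "antisym r" "\<And>x. x \<in> Field r \<Longrightarrow> (x,x) \<in> r"
    "\<And>x y. x \<in> Field r \<Longrightarrow> y \<in> Field r \<Longrightarrow> x \<noteq> y \<Longrightarrow> (x,y) \<in> r \<or> (y,x) \<in> r"
    "wf (r - Id)"
  using assms unfolding well_order_on_def linear_order_on_def partial_order_on_def
    preorder_on_def refl_on_def total_on_def by auto

lemma WO_strict_trans:
  assumes "Well_order r" "(x,y) \<in> r" "x \<noteq> y" "(y,z) \<in> r"
  shows "(x,z) \<in> r \<and> x \<noteq> z"
proof -
  have "(x,z) \<in> r" using WO_D(1)[OF assms(1)] assms(2,4) unfolding trans_def by blast
  moreover have "x \<noteq> z" using WO_D(2)[OF assms(1)] assms(2,3,4) unfolding antisym_def by blast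
  ultimately show ?thesis by blast
qed

lemma WO_strict_trans2:
  assumes "Well_order r" "(x,y) \<in> r" "y \<noteq> z" "(y,z) \<in> r"
  shows "(x,z) \<in> r \<and> x \<noteq> z"
proof -
  have "(x,z) \<in> r" using WO_D(1)[OF assms(1)] assms(2,4) unfolding trans_def by blast
  moreover have "x \<noteq> z" using WO_D(2)[OF assms(1)] assms(2,3,4) unfolding antisym_def by blast
  ultimately show ?thesis by blast
qed

lemma mono_ordLeq:
  assumes r: "Well_order r" and r': "Well_order r'"
    and F: "\<And>x. x \<in> Field r \<Longrightarrow> f x \<in> Field r'"
    and M: "\<And>x y. (x,y) \<in> r \<Longrightarrow> x \<noteq> y \<Longrightarrow> (f x, f y) \<in> r' \<and> f x \<noteq> f y"
  shows "r \<le>o r'"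
proof (rule ccontr)
  assume "\<not> r \<le>o r'"
  then have "r' <o r" using not_ordLeq_iff_ordLess r r' by blast
  then obtain a where a: "a \<in> Field r" and iso: "r' =o Restr r (underS r a)"
    using ordLess_iff_ordIso_Restr r r' by blast
  then obtain g where g: "iso r' (Restr r (underS r a)) g" unfolding ordIso_def by auto
  have FR: "Field (Restr r (underS r a)) = underS r a"
    by (rule Field_Restr_ofilter[OF r]) (simp add: r wo_rel.underS_ofilter wo_rel_def)
  have bij: "bij_betw g (Field r') (underS r a)"
    and ord: "\<And>x y. x \<in> Field r' \<Longrightarrow> y \<in> Field r' \<Longrightarrow> (x,y) \<in> r' \<Longrightarrow> (g x, g y) \<in> Restr r (underS r a)"
    using g FR unfolding iso_iff2 by auto
  define h where "h = g \<circ> f"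
  have hF: "h x \<in> underS r a" if "x \<in> Field r" for x
    using bij F[OF that] unfolding h_def bij_betw_def by auto
  have hM: "(h x, h y) \<in> r \<and> h x \<noteq> h y" if "(x,y) \<in> r" "x \<noteq> y" for x y
  proof -
    have xy: "x \<in> Field r" "y \<in> Field r" using that unfolding Field_def by auto
    have "(f x, f y) \<in> r'" "f x \<noteq> f y" using M that by auto
    then show ?thesis using ord[of "f x" "f y"] F xy bij unfolding h_def bij_betw_def inj_on_def by auto
  qed
  have ge: "(x, h x) \<in> r" if "x \<in> Field r" for x
  proof (rule ccontr)
    assume nx: "(x, h x) \<notin> r"
    let ?Q = "{x \<in> Field r. (x, h x) \<notin> r}"
    have xQ: "x \<in> ?Q" using that nx by auto
    obtain z where z: "z \<in> ?Q" and zmin: "\<And>y. (y,z) \<in> r - Id \<Longrightarrow> y \<notin> ?Q"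
      by (rule wfE_min[OF WO_D(5)[OF r] xQ]) blast
    have hz: "h z \<in> Field r" using hF z underS_Field by fastforce
    have "h z \<noteq> z" using z WO_D(3)[OF r] by auto
    then have "(h z, z) \<in> r" using WO_D(4)[OF r] z hz by auto
    then have 1: "(h (h z), h z) \<in> r" "h (h z) \<noteq> h z" using hM \<open>h z \<noteq> z\<close> by auto
    have "h z \<notin> ?Q" using zmin \<open>(h z, z) \<in> r\<close> \<open>h z \<noteq> z\<close> by auto
    then have "(h z, h (h z)) \<in> r" using hz by auto
    then show False using 1 WO_D(2)[OF r] unfolding antisym_def by blast
  qed
  have "(a, h a) \<in> r" using ge a by auto
  moreover have "(h a, a) \<in> r" "h a \<noteq> a" using hF[OF a] unfolding underS_def by auto
  ultimately show False using WO_D(2)[OF r] unfolding antisym_def by blast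
qed


lemma WO_I:
  assumes "r \<subseteq> Field r \<times> Field r" "\<And>x. x \<in> Field r \<Longrightarrow> (x,x) \<in> r" "trans r" "antisym r"
    "\<And>x y. x \<in> Field r \<Longrightarrow> y \<in> Field r \<Longrightarrow> x \<noteq> y \<Longrightarrow> (x,y) \<in> r \<or> (y,x) \<in> r"
    "wf (r - Id)"
  shows "Well_order r"
  using assms unfolding well_order_on_def linear_order_on_def partial_order_on_def
    preorder_on_def refl_on_def total_on_def by auto

lemma finite_max_WO:
  assumes r: "Well_order r" and "finite D" "D \<noteq> {}" "D \<subseteq> Field r"
  shows "\<exists>z\<in>D. \<forall>y\<in>D. (y,z) \<in> r"
  using assms(2,3,4)
proof (induction D rule: finite_ne_induct)
  case (singleton x) then show ?case using WO_D(3)[OF r] by auto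
next
  case (insert x F)
  then obtain z where z: "z \<in> F" "\<forall>y\<in>F. (y,z) \<in> r" by auto
  show ?case
  proof (cases "(x,z) \<in> r")
    case True then show ?thesis using z by auto
  next
    case False
    then have "(z,x) \<in> r" "x \<noteq> z" using WO_D(4)[OF r, of x z] WO_D(3)[OF r] insert z by auto
    then have "\<forall>y\<in>F. (y,x) \<in> r" using z WO_D(1)[OF r] unfolding trans_def by blast
    then show ?thesis using WO_D(3)[OF r] insert by auto
  qed
qed

lemma Field_two_pow: "Well_order r \<Longrightarrow> Field (two_pow r) = {S. finite S \<and> S \<subseteq> Field r}"
  unfolding two_pow_def Field_def by auto



lemma two_pow_WO:
  assumes r: "Well_order r"
  shows "Well_order (two_pow r)"
proof (rule WO_I)
  show "two_pow r \<subseteq> Field (two_pow r) \<times> Field (two_pow r)" unfolding Field_def by auto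
  show "\<And>x. x \<in> Field (two_pow r) \<Longrightarrow> (x,x) \<in> two_pow r"
    using Field_two_pow[OF r] unfolding two_pow_def by auto
  show "antisym (two_pow r)"
  proof (rule antisymI)
    fix S T assume a: "(S,T) \<in> two_pow r" "(T,S) \<in> two_pow r"
    show "S = T"
    proof (rule ccontr)
      assume "S \<noteq> T"
      then obtain x y where x: "x \<in> T - S" "\<forall>z \<in> (S - T) \<union> (T - S). (z,x) \<in> r"
        and y: "y \<in> S - T" "\<forall>z \<in> (T - S) \<union> (S - T). (z,y) \<in> r"
        using a unfolding two_pow_def by auto
      then have "(x,y) \<in> r" "(y,x) \<in> r" by auto
      then have "x = y" using WO_D(2)[OF r] unfolding antisym_def by blast
      then show False using x y by auto
    qed
  qed
  show "trans (two_pow r)"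
  proof (rule transI)
    fix S T U assume a: "(S,T) \<in> two_pow r" "(T,U) \<in> two_pow r"
    have fin: "finite S" "S \<subseteq> Field r" "finite U" "U \<subseteq> Field r" using a unfolding two_pow_def by auto
    show "(S,U) \<in> two_pow r"
    proof (cases "S = T \<or> T = U")
      case True then show ?thesis using a by auto
    next
      case False
      then obtain x y where x: "x \<in> T - S" "\<forall>z \<in> (S - T) \<union> (T - S). (z,x) \<in> r"
        and y: "y \<in> U - T" "\<forall>z \<in> (T - U) \<union> (U - T). (z,y) \<in> r"
        using a unfolding two_pow_def by auto
      have xF: "x \<in> Field r" "y \<in> Field r" using x y a unfolding two_pow_def by auto
      have "x \<noteq> y" using x y by auto
      then have "(x,y) \<in> r \<and> x \<noteq> y \<or> (y,x) \<in> r \<and> x \<noteq> y" using WO_D(4)[OF r] xF by blast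
      then show ?thesis
      proof
        assume xy: "(x,y) \<in> r \<and> x \<noteq> y"
        have "y \<notin> S"
        proof
          assume "y \<in> S"
          then have "y \<in> S - T" using y by auto
          then have "(y,x) \<in> r" using x by auto
          then show False using xy WO_D(2)[OF r] unfolding antisym_def by blast
        qed
        moreover have "\<forall>z \<in> (S - U) \<union> (U - S). (z,y) \<in> r"
        proof
          fix z assume z: "z \<in> (S - U) \<union> (U - S)"
          show "(z,y) \<in> r"
          proof (cases "z \<in> (T - U) \<union> (U - T)")
            case True then show ?thesis using y by auto
          next
            case False
            then have "z \<in> (S - T) \<union> (T - S)" using z by auto
            then have "(z,x) \<in> r" using x by auto
            then show ?thesis using xy WO_D(1)[OF r] unfolding trans_def by blast
          qed
        qed
        ultimately show ?thesis using y fin unfolding two_pow_def by auto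
      next
        assume yx: "(y,x) \<in> r \<and> x \<noteq> y"
        have "x \<in> U"
        proof (rule ccontr)
          assume "x \<notin> U"
          then have "x \<in> T - U" using x by auto
          then have "(x,y) \<in> r" using y by auto
          then show False using yx WO_D(2)[OF r] unfolding antisym_def by blast
        qed
        moreover have "\<forall>z \<in> (S - U) \<union> (U - S). (z,x) \<in> r"
        proof
          fix z assume z: "z \<in> (S - U) \<union> (U - S)"
          show "(z,x) \<in> r"
          proof (cases "z \<in> (S - T) \<union> (T - S)")
            case True then show ?thesis using x by auto
          next
            case False
            then have "z \<in> (T - U) \<union> (U - T)" using z by auto
            then have "(z,y) \<in> r" using y by auto
            then show ?thesis using yx WO_D(1)[OF r] unfolding trans_def by blast
          qed
        qed
        ultimately show ?thesis using x fin unfolding two_pow_def by auto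
      qed
    qed
  qed
  show "\<And>x y. x \<in> Field (two_pow r) \<Longrightarrow> y \<in> Field (two_pow r) \<Longrightarrow> x \<noteq> y \<Longrightarrow>
      (x,y) \<in> two_pow r \<or> (y,x) \<in> two_pow r"
  proof -
    fix S T assume a: "S \<in> Field (two_pow r)" "T \<in> Field (two_pow r)" "S \<noteq> T"
    let ?D = "(S - T) \<union> (T - S)"
    have fin: "finite S" "S \<subseteq> Field r" "finite T" "T \<subseteq> Field r" using a Field_two_pow[OF r] by auto
    have "finite ?D" "?D \<noteq> {}" "?D \<subseteq> Field r" using fin a(3) by auto
    then have "\<exists>z\<in>?D. \<forall>y\<in>?D. (y,z) \<in> r" by (rule finite_max_WO[OF r])
    then obtain z where z: "z \<in> ?D" "\<forall>y\<in>?D. (y,z) \<in> r" by (elim bexE) (rule that)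
    show "(S,T) \<in> two_pow r \<or> (T,S) \<in> two_pow r"
    proof (cases "z \<in> T - S")
      case True then show ?thesis using z fin unfolding two_pow_def by auto
    next
      case False
      then have "z \<in> S - T" "\<forall>y\<in>(T - S) \<union> (S - T). (y,z) \<in> r" using z by auto
      then show ?thesis using fin unfolding two_pow_def by blast
    qed
  qed
  show "wf (two_pow r - Id)"
  proof (rule wf_subset)
    show "wf (inv_image (mult (r - Id)) mset_set)" using wf_mult[OF WO_D(5)[OF r]] by (rule wf_inv_image)
    show "two_pow r - Id \<subseteq> inv_image (mult (r - Id)) mset_set"
    proof
      fix p assume p: "p \<in> two_pow r - Id"
      obtain S T where pST: "p = (S,T)" by (cases p)
      have fin: "finite S" "finite T" using p pST unfolding two_pow_def by auto
      obtain x where x: "x \<in> T - S" "\<forall>z \<in> (S - T) \<union> (T - S). (z,x) \<in> r"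
        using p pST unfolding two_pow_def by auto
      have eS: "mset_set S = mset_set (S \<inter> T) + mset_set (S - T)"
      proof -
        have "S = (S \<inter> T) \<union> (S - T)" by auto
        then have "mset_set S = mset_set ((S \<inter> T) \<union> (S - T))" by simp
        also have "\<dots> = mset_set (S \<inter> T) + mset_set (S - T)" by (rule mset_set_Union) (use fin in auto)
        finally show ?thesis .
      qed
      have eT: "mset_set T = mset_set (S \<inter> T) + mset_set (T - S)"
      proof -
        have "T = (S \<inter> T) \<union> (T - S)" by auto
        then have "mset_set T = mset_set ((S \<inter> T) \<union> (T - S))" by simp
        also have "\<dots> = mset_set (S \<inter> T) + mset_set (T - S)" by (rule mset_set_Union) (use fin in auto)
        finally show ?thesis .
      qed
      have "(mset_set (S \<inter> T) + mset_set (S - T), mset_set (S \<inter> T) + mset_set (T - S)) \<in> mult (r - Id)"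
      proof (rule one_step_implies_mult)
        show "mset_set (T - S) \<noteq> {#}" using x fin by (simp add: mset_set_empty_iff) (use x in blast)
        show "\<forall>k\<in>#mset_set (S - T). \<exists>j\<in>#mset_set (T - S). (k, j) \<in> r - Id"
          using x fin by auto
      qed
      then show "p \<in> inv_image (mult (r - Id)) mset_set" using pST eS eT by simp
    qed
  qed
qed



lemma Field_times_nat: assumes "Well_order r" shows "Field (times_nat r m) = {(i,a). i < m \<and> a \<in> Field r}"
proof (intro equalityI subsetI)
  fix p assume "p \<in> Field (times_nat r m)" then show "p \<in> {(i,a). i < m \<and> a \<in> Field r}"
    unfolding times_nat_def Field_def by auto
next
  fix p assume "p \<in> {(i,a). i < m \<and> a \<in> Field r}"
  then obtain i a where p: "p = (i,a)" "i < m" "a \<in> Field r" by auto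
  then have "(p,p) \<in> times_nat r m" using WO_D(3)[OF assms] unfolding times_nat_def by auto
  then show "p \<in> Field (times_nat r m)" unfolding Field_def by auto
qed

lemma times_nat_WO:
  assumes r: "Well_order r"
  shows "Well_order (times_nat r m)"
proof (rule WO_I)
  show "times_nat r m \<subseteq> Field (times_nat r m) \<times> Field (times_nat r m)" unfolding Field_def by auto
  show "\<And>x. x \<in> Field (times_nat r m) \<Longrightarrow> (x,x) \<in> times_nat r m"
  proof -
    fix x assume "x \<in> Field (times_nat r m)"
    then obtain i a where x: "x = (i,a)" "i < m" "a \<in> Field r" using Field_times_nat[OF r] by auto
    have "(a,a) \<in> r" using WO_D(3)[OF r] x by auto
    then show "(x,x) \<in> times_nat r m" using x unfolding times_nat_def by blast
  qed
  show "trans (times_nat r m)"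
  proof (rule transI)
    fix x y z assume a: "(x,y) \<in> times_nat r m" "(y,z) \<in> times_nat r m"
    obtain i a1 where x: "x = (i,a1)" by (cases x)
    obtain j b where y: "y = (j,b)" by (cases y)
    obtain k c where z: "z = (k,c)" by (cases z)
    have "(a1,b) \<in> r \<Longrightarrow> (b,c) \<in> r \<Longrightarrow> (a1,c) \<in> r" using WO_D(1)[OF r] unfolding trans_def by blast
    then show "(x,z) \<in> times_nat r m" using a x y z unfolding times_nat_def by auto
  qed
  show "antisym (times_nat r m)"
  proof (rule antisymI)
    fix x y assume a: "(x,y) \<in> times_nat r m" "(y,x) \<in> times_nat r m"
    obtain i a1 where x: "x = (i,a1)" by (cases x)
    obtain j b where y: "y = (j,b)" by (cases y)
    have "(a1,b) \<in> r \<Longrightarrow> (b,a1) \<in> r \<Longrightarrow> a1 = b" using WO_D(2)[OF r] unfolding antisym_def by blast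
    then show "x = y" using a x y unfolding times_nat_def by auto
  qed
  show "\<And>x y. x \<in> Field (times_nat r m) \<Longrightarrow> y \<in> Field (times_nat r m) \<Longrightarrow> x \<noteq> y \<Longrightarrow>
      (x,y) \<in> times_nat r m \<or> (y,x) \<in> times_nat r m"
  proof -
    fix x y assume a: "x \<in> Field (times_nat r m)" "y \<in> Field (times_nat r m)" "x \<noteq> y"
    obtain i a1 where x: "x = (i,a1)" by (cases x)
    obtain j b where y: "y = (j,b)" by (cases y)
    have f: "i < m" "j < m" "a1 \<in> Field r" "b \<in> Field r" using a x y Field_times_nat[OF r] by auto
    show "(x,y) \<in> times_nat r m \<or> (y,x) \<in> times_nat r m"
    proof (cases "i = j")
      case True
      then have "a1 \<noteq> b" using a x y by auto
      then have "(a1,b) \<in> r \<or> (b,a1) \<in> r" using WO_D(4)[OF r] f by blast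
      then show ?thesis using True f x y unfolding times_nat_def by auto
    next
      case False
      then have "i < j \<or> j < i" by arith
      then show ?thesis using f x y unfolding times_nat_def by auto
    qed
  qed
  show "wf (times_nat r m - Id)"
  proof (rule wf_subset)
    show "wf (less_than <*lex*> (r - Id))" using WO_D(5)[OF r] by (rule wf_lex_prod[OF wf_less_than])
    show "times_nat r m - Id \<subseteq> less_than <*lex*> (r - Id)"
    proof
      fix p assume p: "p \<in> times_nat r m - Id"
      then show "p \<in> less_than <*lex*> (r - Id)" unfolding times_nat_def by auto
    qed
  qed
qed



lemma Field_one_plus: assumes "Well_order r" shows "Field (one_plus r) = insert None (Some ` Field r)"
proof (intro equalityI subsetI)
  fix p assume "p \<in> Field (one_plus r)" then show "p \<in> insert None (Some ` Field r)"
    unfolding one_plus_def Field_def by auto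
next
  fix p assume "p \<in> insert None (Some ` Field r)"
  then have "(p,p) \<in> one_plus r" using WO_D(3)[OF assms] unfolding one_plus_def by auto
  then show "p \<in> Field (one_plus r)" unfolding Field_def by auto
qed

lemma one_plus_WO:
  assumes r: "Well_order r"
  shows "Well_order (one_plus r)"
proof (rule WO_I)
  show "one_plus r \<subseteq> Field (one_plus r) \<times> Field (one_plus r)" unfolding Field_def by auto
  show "\<And>x. x \<in> Field (one_plus r) \<Longrightarrow> (x,x) \<in> one_plus r"
  proof -
    fix x assume "x \<in> Field (one_plus r)"
    then have "x = None \<or> (\<exists>a. x = Some a \<and> a \<in> Field r)" using Field_one_plus[OF r] by auto
    then show "(x,x) \<in> one_plus r" using WO_D(3)[OF r] unfolding one_plus_def by auto
  qed
  show "trans (one_plus r)"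
  proof (rule transI)
    fix x y z assume a: "(x,y) \<in> one_plus r" "(y,z) \<in> one_plus r"
    have t: "(a1,b) \<in> r \<Longrightarrow> (b,c) \<in> r \<Longrightarrow> (a1,c) \<in> r" for a1 b c using WO_D(1)[OF r] unfolding trans_def by blast
    have fz: "(b,c) \<in> r \<Longrightarrow> c \<in> Field r" for b c unfolding Field_def by auto
    show "(x,z) \<in> one_plus r"
    proof (cases x)
      case None
      then show ?thesis using a unfolding one_plus_def by (cases y; cases z) (auto intro: fz)
    next
      case (Some a1)
      then show ?thesis using a unfolding one_plus_def by (cases y; cases z) (auto intro: t)
    qed
  qed
  show "antisym (one_plus r)"
  proof (rule antisymI)
    fix x y assume a: "(x,y) \<in> one_plus r" "(y,x) \<in> one_plus r"
    show "x = y" using a WO_D(2)[OF r] unfolding one_plus_def antisym_def by (cases x; cases y) auto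
  qed
  show "\<And>x y. x \<in> Field (one_plus r) \<Longrightarrow> y \<in> Field (one_plus r) \<Longrightarrow> x \<noteq> y \<Longrightarrow>
      (x,y) \<in> one_plus r \<or> (y,x) \<in> one_plus r"
  proof -
    fix x y assume a: "x \<in> Field (one_plus r)" "y \<in> Field (one_plus r)" "x \<noteq> y"
    show "(x,y) \<in> one_plus r \<or> (y,x) \<in> one_plus r"
    proof (cases x)
      case None
      then obtain b where "y = Some b" "b \<in> Field r" using a Field_one_plus[OF r] by auto
      then show ?thesis using None unfolding one_plus_def by simp
    next
      case (Some a1)
      show ?thesis
      proof (cases y)
        case None then show ?thesis using Some a Field_one_plus[OF r] unfolding one_plus_def by auto
      next
        case (Some b)
        then have "a1 \<in> Field r" "b \<in> Field r" "a1 \<noteq> b" using \<open>x = Some a1\<close> a Field_one_plus[OF r] by auto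
        then have "(a1,b) \<in> r \<or> (b,a1) \<in> r" using WO_D(4)[OF r] by blast
        then show ?thesis using Some \<open>x = Some a1\<close> unfolding one_plus_def by auto
      qed
    qed
  qed
  show "wf (one_plus r - Id)"
  proof (rule wf_subset)
    show "wf (inv_image (less_than <*lex*> (r - Id)) (\<lambda>x. case x of None \<Rightarrow> (0::nat, undefined) | Some a \<Rightarrow> (1, a)))"
      using WO_D(5)[OF r] by (intro wf_inv_image wf_lex_prod[OF wf_less_than])
    show "one_plus r - Id \<subseteq> inv_image (less_than <*lex*> (r - Id)) (\<lambda>x. case x of None \<Rightarrow> (0::nat, undefined) | Some a \<Rightarrow> (1, a))"
    proof
      fix p assume p: "p \<in> one_plus r - Id"
      obtain x y where xy: "p = (x,y)" by (cases p)
      show "p \<in> inv_image (less_than <*lex*> (r - Id)) (\<lambda>x. case x of None \<Rightarrow> (0::nat, undefined) | Some a \<Rightarrow> (1, a))"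
        using p unfolding xy one_plus_def by (cases x; cases y) auto
    qed
  qed
qed



definition ch :: "'n list set \<Rightarrow> 'n list \<Rightarrow> 'n list set" where
  "ch T s = {t. (t,s) \<in> tree_child T}"

abbreviation rk where "rk \<equiv> tree_rank"

lemma bigW_WO: "Well_order (bigW :: 'n list set rel)"
  unfolding bigW_def by (rule cardSuc_Well_order[OF card_of_Card_order])

lemma bigW_Card: "Card_order (bigW :: 'n list set rel)"
  unfolding bigW_def by (rule cardSuc_Card_order[OF card_of_Card_order])

lemma bigW_wo_rel: "wo_rel (bigW :: 'n list set rel)"
  using bigW_WO unfolding wo_rel_def .

lemma bigW_bounded:
  assumes "B \<subseteq> Field (bigW :: 'n list set rel)" "|B| \<le>o |UNIV :: 'n list set|"
  shows "\<exists>i\<in>Field (bigW :: 'n list set rel). \<forall>b\<in>B. (b,i) \<in> bigW \<and> b \<noteq> i"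
proof -
  let ?r = "|UNIV :: 'n list set|"
  let ?W = "bigW :: 'n list set rel"
  have cr: "Card_order ?r" by (rule card_of_Card_order)
  have inf: "\<not> finite (UNIV :: 'n list set)" by (rule infinite_UNIV_listI)
  have u1: "|underS ?W b| \<le>o ?r" if "b \<in> B" for b
  proof -
    have bF: "b \<in> Field ?W" using that assms(1) by blast
    have "|underS ?W b| <o ?W" by (rule card_of_underS[OF bigW_Card bF])
    then show ?thesis using cardSuc_ordLeq_ordLess[OF cr card_of_Card_order, of "underS ?W b"] unfolding bigW_def by simp
  qed
  have U1: "|\<Union>b\<in>B. underS ?W b| \<le>o ?r" using card_of_UNION_ordLeq_infinite[OF inf assms(2), of "underS ?W"] u1 by simp
  have inf2: "\<not> finite (Field ?r)" using inf by (simp add: Field_card_of)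
  have U: "|B \<union> (\<Union>b\<in>B. underS ?W b)| \<le>o ?r"
    by (rule card_of_Un_ordLeq_infinite_Field[OF inf2 assms(2) U1 cr])
  have "?r <o ?W" unfolding bigW_def by (rule cardSuc_greater[OF cr])
  then have "|B \<union> (\<Union>b\<in>B. underS ?W b)| <o ?W" by (rule ordLeq_ordLess_trans[OF U])
  moreover have "?W =o |Field ?W|" by (rule ordIso_symmetric[OF card_of_Field_ordIso[OF bigW_Card]])
  ultimately have L: "|B \<union> (\<Union>b\<in>B. underS ?W b)| <o |Field ?W|"
    by (rule ordLess_ordIso_trans)
  have "\<not> Field ?W \<subseteq> B \<union> (\<Union>b\<in>B. underS ?W b)"
  proof
    assume "Field ?W \<subseteq> B \<union> (\<Union>b\<in>B. underS ?W b)"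
    then have "|Field ?W| \<le>o |B \<union> (\<Union>b\<in>B. underS ?W b)|" by (rule card_of_mono1)
    then show False using not_ordLess_ordLeq[OF L] by simp
  qed
  then obtain i where i: "i \<in> Field ?W" "i \<notin> B" "\<forall>b\<in>B. i \<notin> underS ?W b" by auto
  have "(b,i) \<in> ?W \<and> b \<noteq> i" if "b \<in> B" for b
  proof -
    have "b \<noteq> i" using i that by auto
    moreover have "(i,b) \<notin> ?W" using i that \<open>b \<noteq> i\<close> unfolding underS_def by auto
    ultimately show ?thesis using WO_D(4)[OF bigW_WO, of b i] i assms(1) that by auto
  qed
  then show ?thesis using i by blast
qed

lemma rank_eq:
  assumes "wf (tree_child T)"
  shows "rk T s = wo_rel.suc bigW (rk T ` ch T s)"
proof -
  have "rk T s = (\<lambda>f s. wo_rel.suc bigW (f ` {t. (t, s) \<in> tree_child T})) (cut (rk T) (tree_child T) s) s"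
    unfolding tree_rank_def by (rule wfrec[OF assms])
  also have "\<dots> = wo_rel.suc bigW (rk T ` ch T s)"
  proof -
    have "cut (rk T) (tree_child T) s ` {t. (t, s) \<in> tree_child T} = rk T ` ch T s"
      unfolding ch_def by (auto simp: cut_apply)
    then show ?thesis by simp
  qed
  finally show ?thesis .
qed

lemma card_ch: "|rk T ` ch T s| \<le>o |UNIV :: 'n list set|" for T :: "'n list set"
  using card_of_image card_of_mono1[of "ch T s" UNIV] ordLeq_transitive by blast

lemma rank_props:
  fixes T :: "'n list set"
  assumes wf: "wf (tree_child T)"
  shows "rk T s \<in> Field bigW \<and> AboveS bigW (rk T ` ch T s) \<noteq> {}"
  using wf
proof (induction s rule: wf_induct_rule)
  case (less s)
  have sub: "rk T ` ch T s \<subseteq> Field bigW" using less unfolding ch_def by auto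
  obtain i where i: "i \<in> Field bigW" "\<forall>b\<in>rk T ` ch T s. (b,i) \<in> bigW \<and> b \<noteq> i"
    using bigW_bounded[OF sub card_ch] by blast
  have "i \<in> AboveS bigW (rk T ` ch T s)" using i unfolding AboveS_def by blast
  then have A: "AboveS bigW (rk T ` ch T s) \<noteq> {}" by blast
  have "rk T s \<in> Field bigW"
    by (subst rank_eq[OF wf, of s]) (rule wo_rel.suc_inField[OF bigW_wo_rel sub A])
  then show ?case using A by auto
qed

lemma rank_inField: "wf (tree_child T) \<Longrightarrow> rk T s \<in> Field bigW"
  using rank_props by blast

lemma rank_child_less:
  assumes wf: "wf (tree_child T)" and t: "t \<in> ch T s"
  shows "(rk T t, rk T s) \<in> bigW \<and> rk T t \<noteq> rk T s"
proof -
  have sub: "rk T ` ch T s \<subseteq> Field bigW" using rank_inField[OF wf] by auto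
  have "wo_rel.suc bigW (rk T ` ch T s) \<noteq> rk T t \<and> (rk T t, wo_rel.suc bigW (rk T ` ch T s)) \<in> bigW"
    using wo_rel.suc_greater[OF bigW_wo_rel sub] rank_props[OF wf, of s] t by blast
  then show ?thesis using rank_eq[OF wf, of s] by auto
qed

lemma rank_below:
  assumes wf: "wf (tree_child T)" and y: "(y, rk T s) \<in> bigW" "y \<noteq> rk T s"
  shows "\<exists>t\<in>ch T s. (y, rk T t) \<in> bigW"
proof (rule ccontr)
  assume na: "\<not> ?thesis"
  have yF: "y \<in> Field bigW" using y unfolding Field_def by auto
  have "\<forall>b\<in>rk T ` ch T s. y \<noteq> b \<and> (b, y) \<in> bigW"
  proof
    fix b assume "b \<in> rk T ` ch T s"
    then obtain t where t: "t \<in> ch T s" "b = rk T t" by auto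
    then have "(y, b) \<notin> bigW" using na by auto
    moreover have "b \<in> Field bigW" using t rank_inField[OF wf] by auto
    ultimately show "y \<noteq> b \<and> (b, y) \<in> bigW"
      using WO_D(4)[OF bigW_WO, of y b] WO_D(3)[OF bigW_WO, of y] yF by auto
  qed
  then have "y \<in> AboveS bigW (rk T ` ch T s)" using yF unfolding AboveS_def by auto
  then have "(wo_rel.suc bigW (rk T ` ch T s), y) \<in> bigW"
    by (rule wo_rel.suc_least_AboveS[OF bigW_wo_rel])
  then have "(rk T s, y) \<in> bigW" using rank_eq[OF wf, of s] by simp
  then show False using y WO_D(2)[OF bigW_WO] unfolding antisym_def by blast
qed

definition pclosed :: "'n list set \<Rightarrow> bool" where
  "pclosed T \<longleftrightarrow> (\<forall>s x. s @ [x] \<in> T \<longrightarrow> s \<in> T)"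

lemma pclosed_append: "pclosed T \<Longrightarrow> s @ u \<in> T \<Longrightarrow> s \<in> T"
proof (induction u rule: rev_induct)
  case Nil then show ?case by simp
next
  case (snoc x xs)
  have "(s @ xs) @ [x] \<in> T" using snoc(3) by simp
  then have "s @ xs \<in> T" using snoc(2) unfolding pclosed_def by blast
  then show ?case using snoc(1,2) by blast
qed

lemma ch_mem: "s \<in> T \<Longrightarrow> s @ [x] \<in> T \<Longrightarrow> s @ [x] \<in> ch T s"
  unfolding ch_def tree_child_def by auto

lemma ch_form: "t \<in> ch T s \<Longrightarrow> \<exists>x. t = s @ [x] \<and> s \<in> T \<and> s @ [x] \<in> T"
  unfolding ch_def tree_child_def by auto

lemma rank_desc_less:
  assumes wf: "wf (tree_child T)" and pc: "pclosed T" and su: "s @ u \<in> T" "u \<noteq> []"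
  shows "(rk T (s @ u), rk T s) \<in> bigW \<and> rk T (s @ u) \<noteq> rk T s"
  using su
proof (induction u rule: rev_induct)
  case Nil then show ?case by simp
next
  case (snoc x xs)
  have m: "s @ xs \<in> T" using pclosed_append[OF pc, of "s @ xs" "[x]"] snoc by simp
  have c: "(rk T (s @ xs @ [x]), rk T (s @ xs)) \<in> bigW \<and> rk T (s @ xs @ [x]) \<noteq> rk T (s @ xs)"
    using rank_child_less[OF wf ch_mem[OF m, of x]] snoc by simp
  show ?case
  proof (cases "xs = []")
    case True then show ?thesis using c by simp
  next
    case False
    then have d: "(rk T (s @ xs), rk T s) \<in> bigW \<and> rk T (s @ xs) \<noteq> rk T s" using snoc m by simp
    have "(rk T (s @ xs @ [x]), rk T s) \<in> bigW \<and> rk T (s @ xs @ [x]) \<noteq> rk T s"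
      using WO_strict_trans[OF bigW_WO, of "rk T (s @ xs @ [x])" "rk T (s @ xs)" "rk T s"] c d by blast
    then show ?thesis by simp
  qed
qed

lemma rank_exact:
  assumes wf: "wf (tree_child T)"
  shows "s \<in> T \<Longrightarrow> (y, rk T s) \<in> bigW \<Longrightarrow> y \<noteq> rk T s \<Longrightarrow> \<exists>u. u \<noteq> [] \<and> s @ u \<in> T \<and> rk T (s @ u) = y"
  using wf
proof (induction s rule: wf_induct_rule)
  case (less s)
  obtain t where t: "t \<in> ch T s" "(y, rk T t) \<in> bigW" using rank_below[OF wf less(3,4)] by blast
  obtain x where x: "t = s @ [x]" "s @ [x] \<in> T" using ch_form[OF t(1)] by auto
  show ?case
  proof (cases "y = rk T t")
    case True then show ?thesis using x by (intro exI[of _ "[x]"]) auto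
  next
    case False
    have "(t, s) \<in> tree_child T" using t(1) unfolding ch_def by auto
    have tT: "t \<in> T" using x by simp
    have "y \<noteq> rk T t" using False .
    then obtain u where "u \<noteq> []" "t @ u \<in> T" "rk T (t @ u) = y" using less(1)[OF \<open>(t, s) \<in> tree_child T\<close> tT t(2)] by blast
    then show ?thesis using x by (intro exI[of _ "x # u"]) auto
  qed
qed

lemma rank_subtree:
  assumes wf: "wf (tree_child T)"
  shows "(\<forall>w. p @ w \<in> T \<longleftrightarrow> q @ w \<in> T) \<Longrightarrow> rk T p = rk T q"
  using wf
proof (induction p arbitrary: q rule: wf_induct_rule)
  case (less p)
  have pq: "p \<in> T \<longleftrightarrow> q \<in> T" using less(2)[rule_format, of "[]"] by simp
  have "rk T ` ch T p = rk T ` ch T q"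
  proof (intro equalityI subsetI)
    fix z assume "z \<in> rk T ` ch T p"
    then obtain x where x: "p \<in> T" "p @ [x] \<in> T" "z = rk T (p @ [x])"
      using ch_form by blast
    have pc: "(p @ [x], p) \<in> tree_child T" using ch_mem[OF x(1,2)] unfolding ch_def by simp
    have "\<forall>w. (p @ [x]) @ w \<in> T \<longleftrightarrow> (q @ [x]) @ w \<in> T"
    proof
      fix w
      have "p @ (x # w) \<in> T \<longleftrightarrow> q @ (x # w) \<in> T" using less(2)[rule_format, of "x # w"] .
      then show "(p @ [x]) @ w \<in> T \<longleftrightarrow> (q @ [x]) @ w \<in> T" by simp
    qed
    then have eq: "rk T (p @ [x]) = rk T (q @ [x])" by (rule less(1)[OF pc, of "q @ [x]"])
    have qT: "q \<in> T" using pq x(1) by simp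
    have qxT: "q @ [x] \<in> T" using less(2)[rule_format, of "[x]"] x(2) by simp
    have "q @ [x] \<in> ch T q" by (rule ch_mem[OF qT qxT])
    then have "rk T (q @ [x]) \<in> rk T ` ch T q" by (rule imageI)
    then show "z \<in> rk T ` ch T q" using eq x(3) by simp
  next
    fix z assume "z \<in> rk T ` ch T q"
    then obtain x where x: "q \<in> T" "q @ [x] \<in> T" "z = rk T (q @ [x])"
      using ch_form by blast
    have pT: "p \<in> T" "p @ [x] \<in> T" using pq x less(2)[rule_format, of "[x]"] by auto
    have pc: "(p @ [x], p) \<in> tree_child T" using ch_mem[OF pT] unfolding ch_def by simp
    have "\<forall>w. (p @ [x]) @ w \<in> T \<longleftrightarrow> (q @ [x]) @ w \<in> T"
    proof
      fix w
      have "p @ (x # w) \<in> T \<longleftrightarrow> q @ (x # w) \<in> T" using less(2)[rule_format, of "x # w"] .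
      then show "(p @ [x]) @ w \<in> T \<longleftrightarrow> (q @ [x]) @ w \<in> T" by simp
    qed
    then have eq: "rk T (p @ [x]) = rk T (q @ [x])" by (rule less(1)[OF pc, of "q @ [x]"])
    have "p @ [x] \<in> ch T p" by (rule ch_mem[OF pT])
    then have "rk T (p @ [x]) \<in> rk T ` ch T p" by (rule imageI)
    then show "z \<in> rk T ` ch T p" using eq x(3) by simp
  qed
  then show ?case using rank_eq[OF wf, of p] rank_eq[OF wf, of q] by simp
qed

lemma Field_tree_height:
  "Field (tree_height T) = underS bigW (rk T [])"
  unfolding tree_height_def
  by (rule Field_Restr_ofilter[OF bigW_WO]) (rule wo_rel.underS_ofilter[OF bigW_wo_rel])

lemma tree_height_WO: "Well_order (tree_height T)"
  unfolding tree_height_def by (rule Well_order_Restr[OF bigW_WO])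



lemma tree_mono:
  fixes T :: "'n list set" and W :: "'b rel"
  assumes wf: "wf (tree_child T)" and pc: "pclosed T" and root: "[] \<in> T" and W: "Well_order W"
    and gF: "\<And>t. t \<in> T \<Longrightarrow> t \<noteq> [] \<Longrightarrow> g t \<in> Field W"
    and gM: "\<And>t u. t \<in> T \<Longrightarrow> t \<noteq> [] \<Longrightarrow> t @ u \<in> T \<Longrightarrow> u \<noteq> [] \<Longrightarrow> (g (t @ u), g t) \<in> W \<and> g (t @ u) \<noteq> g t"
  shows "\<exists>f. (\<forall>y\<in>Field (tree_height T). f y \<in> g ` {t \<in> T. t \<noteq> [] \<and> rk T t = y}) \<and>
    (\<forall>y y'. y \<in> Field (tree_height T) \<longrightarrow> y' \<in> Field (tree_height T) \<longrightarrow> (y,y') \<in> bigW \<longrightarrow> y \<noteq> y' \<longrightarrow>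
       (f y, f y') \<in> W \<and> f y \<noteq> f y')"
proof -
  define Nd where "Nd y = {t \<in> T. t \<noteq> [] \<and> rk T t = y}" for y
  define f where "f y = wo_rel.minim W (g ` Nd y)" for y
  have woW: "wo_rel W" using W unfolding wo_rel_def .
  have ne: "Nd y \<noteq> {}" if "y \<in> Field (tree_height T)" for y
  proof -
    have "(y, rk T []) \<in> bigW" "y \<noteq> rk T []" using that unfolding Field_tree_height underS_def by auto
    then obtain u where "u \<noteq> []" "[] @ u \<in> T" "rk T ([] @ u) = y" using rank_exact[OF wf root] by blast
    then show ?thesis unfolding Nd_def by auto
  qed
  have sub: "g ` Nd y \<subseteq> Field W" for y using gF unfolding Nd_def by auto
  have fin: "f y \<in> g ` Nd y" if "y \<in> Field (tree_height T)" for y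
    unfolding f_def using wo_rel.minim_in[OF woW sub] ne[OF that] by blast
  have mono: "(f y, f y') \<in> W \<and> f y \<noteq> f y'"
    if y: "y \<in> Field (tree_height T)" "y' \<in> Field (tree_height T)" "(y,y') \<in> bigW" "y \<noteq> y'" for y y'
  proof -
    obtain t' where t': "t' \<in> Nd y'" "f y' = g t'" using fin[OF y(2)] by auto
    have t'T: "t' \<in> T" "t' \<noteq> []" "rk T t' = y'" using t' unfolding Nd_def by auto
    obtain u where u: "u \<noteq> []" "t' @ u \<in> T" "rk T (t' @ u) = y"
      using rank_exact[OF wf t'T(1)] y t'T by blast
    have "t' @ u \<in> Nd y" using u unfolding Nd_def by auto
    then have a: "(f y, g (t' @ u)) \<in> W" unfolding f_def using wo_rel.minim_least[OF woW sub] by blast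
    have b: "(g (t' @ u), g t') \<in> W \<and> g (t' @ u) \<noteq> g t'" using gM[OF t'T(1,2) u(2,1)] .
    have "(f y, g t') \<in> W \<and> f y \<noteq> g t'" using WO_strict_trans2[OF W a] b by blast
    then show ?thesis using t'(2) by simp
  qed
  have A1: "\<forall>y\<in>Field (tree_height T). f y \<in> g ` {t \<in> T. t \<noteq> [] \<and> rk T t = y}"
    using fin unfolding Nd_def by blast
  have A2: "\<forall>y y'. y \<in> Field (tree_height T) \<longrightarrow> y' \<in> Field (tree_height T) \<longrightarrow> (y,y') \<in> bigW \<longrightarrow> y \<noteq> y' \<longrightarrow>
       (f y, f y') \<in> W \<and> f y \<noteq> f y'" using mono by blast
  show ?thesis by (rule exI[of _ f]) (rule conjI[OF A1 A2])
qed

lemma tree_height_le: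
  fixes T :: "'n list set" and W :: "'b rel"
  assumes wf: "wf (tree_child T)" and pc: "pclosed T" and root: "[] \<in> T" and W: "Well_order W"
    and gF: "\<And>t. t \<in> T \<Longrightarrow> t \<noteq> [] \<Longrightarrow> g t \<in> Field W"
    and gM: "\<And>t u. t \<in> T \<Longrightarrow> t \<noteq> [] \<Longrightarrow> t @ u \<in> T \<Longrightarrow> u \<noteq> [] \<Longrightarrow> (g (t @ u), g t) \<in> W \<and> g (t @ u) \<noteq> g t"
  shows "(tree_height T, W) \<in> ordLeq"
proof -
  have ex: "\<exists>f. (\<forall>y\<in>Field (tree_height T). f y \<in> g ` {t \<in> T. t \<noteq> [] \<and> rk T t = y}) \<and>
    (\<forall>y y'. y \<in> Field (tree_height T) \<longrightarrow> y' \<in> Field (tree_height T) \<longrightarrow> (y,y') \<in> bigW \<longrightarrow> y \<noteq> y' \<longrightarrow>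
       (f y, f y') \<in> W \<and> f y \<noteq> f y')"
  proof (rule tree_mono[OF wf pc root W])
    show "\<And>t. t \<in> T \<Longrightarrow> t \<noteq> [] \<Longrightarrow> g t \<in> Field W" by (rule gF)
    show "\<And>t u. t \<in> T \<Longrightarrow> t \<noteq> [] \<Longrightarrow> t @ u \<in> T \<Longrightarrow> u \<noteq> [] \<Longrightarrow> (g (t @ u), g t) \<in> W \<and> g (t @ u) \<noteq> g t" by (rule gM)
  qed
  then obtain f where f: "\<forall>y\<in>Field (tree_height T). f y \<in> g ` {t \<in> T. t \<noteq> [] \<and> rk T t = y}"
    "\<forall>y y'. y \<in> Field (tree_height T) \<longrightarrow> y' \<in> Field (tree_height T) \<longrightarrow> (y,y') \<in> bigW \<longrightarrow> y \<noteq> y' \<longrightarrow>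
       (f y, f y') \<in> W \<and> f y \<noteq> f y'" by blast
  show ?thesis
  proof (rule mono_ordLeq[OF tree_height_WO W])
    show "f x \<in> Field W" if xF: "x \<in> Field (tree_height T)" for x
    proof -
      have "f x \<in> g ` {t \<in> T. t \<noteq> [] \<and> rk T t = x}" using f(1) xF by blast
      then obtain t where "t \<in> T" "t \<noteq> []" "f x = g t" by blast
      then show ?thesis using gF by simp
    qed
    show "(f x, f y) \<in> W \<and> f x \<noteq> f y" if xy: "(x, y) \<in> tree_height T" "x \<noteq> y" for x y
    proof -
      have "x \<in> Field (tree_height T)" "y \<in> Field (tree_height T)" using FieldI1[OF xy(1)] FieldI2[OF xy(1)] .
      moreover have "(x,y) \<in> bigW" using xy(1) unfolding tree_height_def by simp
      ultimately show ?thesis using f(2) xy(2) by simp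
    qed
  qed
qed



lemma Dec_iff: "xs \<in> Dec A le \<longleftrightarrow> set xs \<subseteq> A \<and> sorted_wrt (\<lambda>x y. strict le y x) xs"
  unfolding Dec_def by (auto simp: sorted_wrt_iff_nth_less)

lemma Dec_nil: "[] \<in> Dec A le"
  unfolding Dec_iff by simp

lemma Dec_pclosed: "pclosed (Dec A le)"
  unfolding pclosed_def Dec_iff by (auto simp: sorted_wrt_append)

lemma tree_child_D: "(t, s) \<in> tree_child T \<Longrightarrow> \<exists>x. t = s @ [x] \<and> s \<in> T \<and> t \<in> T"
  unfolding tree_child_def by auto

lemma Dec_wf:
  assumes NB: "\<And>a. (\<forall>i::nat. a i \<in> A) \<Longrightarrow> \<not> (\<forall>i j. i < j \<longrightarrow> strict le (a j) (a i))"
  shows "wf (tree_child (Dec A le))"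
proof (rule ccontr)
  assume "\<not> wf (tree_child (Dec A le))"
  then obtain f where f: "\<And>i. (f (Suc i), f i) \<in> tree_child (Dec A le)"
    unfolding wf_iff_no_infinite_down_chain by blast
  have step: "\<exists>x. f (Suc i) = f i @ [x]" for i using tree_child_D[OF f[of i]] by blast
  have inD: "f i \<in> Dec A le" for i using tree_child_D[OF f[of i]] by blast
  have pre: "\<exists>u. f (i + k) = f i @ u \<and> length u = k" for i k
  proof (induction k)
    case 0 then show ?case by simp
  next
    case (Suc k)
    then obtain u where u: "f (i + k) = f i @ u" "length u = k" by blast
    obtain x where "f (Suc (i + k)) = f (i + k) @ [x]" using step by blast
    then show ?case using u by (intro exI[of _ "u @ [x]"]) simp
  qed
  define L where "L i = length (f i)" for i
  define a where "a i = f (Suc i) ! L i" for i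
  have lenS: "length (f (Suc i)) = Suc (L i)" for i
    using step[of i] unfolding L_def by auto
  have aj: "f (Suc j) ! L i = a i" if "i \<le> j" for i j
  proof -
    obtain u where u: "f (Suc i + (j - i)) = f (Suc i) @ u" using pre by blast
    have "Suc i + (j - i) = Suc j" using that by simp
    then have "f (Suc j) = f (Suc i) @ u" using u by simp
    then show ?thesis unfolding a_def using lenS[of i] by (simp add: nth_append)
  qed
  have Lmono: "L i < L j" if "i < j" for i j
  proof -
    obtain u where u: "f (i + (j - i)) = f i @ u" "length u = j - i" using pre by blast
    have "i + (j - i) = j" using that by simp
    then show ?thesis using u that unfolding L_def by (metis length_append less_add_same_cancel1 zero_less_diff)
  qed
  have aA: "a i \<in> A" for i
  proof -
    have "set (f (Suc i)) \<subseteq> A" using inD[of "Suc i"] unfolding Dec_iff by blast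
    moreover have "L i < length (f (Suc i))" using lenS by simp
    ultimately show ?thesis unfolding a_def by (meson nth_mem subsetD)
  qed
  have "strict le (a j) (a i)" if "i < j" for i j
  proof -
    have s: "sorted_wrt (\<lambda>x y. strict le y x) (f (Suc j))" using inD[of "Suc j"] unfolding Dec_iff by blast
    have "L i < L j" "L j < length (f (Suc j))" using Lmono that lenS by auto
    then have "strict le (f (Suc j) ! L j) (f (Suc j) ! L i)" using s unfolding sorted_wrt_iff_nth_less by blast
    then show ?thesis using aj[of i j] aj[of j j] that by simp
  qed
  then show False using NB[of a] aA by blast
qed

locale WQ =
  fixes A :: "'a set" and le :: "'a \<Rightarrow> 'a \<Rightarrow> bool"
  assumes wqo: "wqo_on A le"
begin

lemma qo: "qo_on A le" using wqo unfolding wqo_on_def by (rule conjunct1)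
lemma lrefl: "x \<in> A \<Longrightarrow> le x x" using qo unfolding qo_on_def by (elim conjE) (rule bspec)
lemma trans: "x \<in> A \<Longrightarrow> y \<in> A \<Longrightarrow> z \<in> A \<Longrightarrow> le x y \<Longrightarrow> le y z \<Longrightarrow> le x z"
proof -
  have "\<forall>x\<in>A. \<forall>y\<in>A. \<forall>z\<in>A. le x y \<longrightarrow> le y z \<longrightarrow> le x z" using qo unfolding qo_on_def by (rule conjunct2)
  then show "x \<in> A \<Longrightarrow> y \<in> A \<Longrightarrow> z \<in> A \<Longrightarrow> le x y \<Longrightarrow> le y z \<Longrightarrow> le x z" by blast
qed
lemma good: fixes f :: "nat \<Rightarrow> 'a" shows "(\<And>i. f i \<in> A) \<Longrightarrow> \<exists>i j. i < j \<and> le (f i) (f j)"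
proof -
  have "\<forall>f :: nat \<Rightarrow> 'a. (\<forall>i. f i \<in> A) \<longrightarrow> (\<exists>i j. i < j \<and> le (f i) (f j))"
    using wqo unfolding wqo_on_def by (rule conjunct2)
  then show "(\<And>i. f i \<in> A) \<Longrightarrow> \<exists>i j. i < j \<and> le (f i) (f j)" by blast
qed

lemma strict_trans1: "x \<in> A \<Longrightarrow> y \<in> A \<Longrightarrow> z \<in> A \<Longrightarrow> strict le x y \<Longrightarrow> le y z \<Longrightarrow> strict le x z"
  unfolding strict_def using trans by blast
lemma strict_trans2: "x \<in> A \<Longrightarrow> y \<in> A \<Longrightarrow> z \<in> A \<Longrightarrow> le x y \<Longrightarrow> strict le y z \<Longrightarrow> strict le x z"
  unfolding strict_def using trans by blast

abbreviation D where "D \<equiv> Dec A le"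

lemma wfD: "wf (tree_child D)"
proof (rule Dec_wf)
  fix a :: "nat \<Rightarrow> 'a" assume aA: "\<forall>i. a i \<in> A"
  show "\<not> (\<forall>i j. i < j \<longrightarrow> strict le (a j) (a i))"
    using good[of a] aA unfolding strict_def by blast
qed

definition ht where "ht a = rk D [a]"

lemma sub_suffix:
  assumes "s @ [a] \<in> D"
  shows "(s @ [a]) @ w \<in> D \<longleftrightarrow> [a] @ w \<in> D"
proof -
  have sA: "set s \<subseteq> A" "a \<in> A" and sa: "\<forall>x\<in>set s. strict le a x"
    using assms unfolding Dec_iff by (auto simp: sorted_wrt_append)
  show ?thesis
  proof
    assume "(s @ [a]) @ w \<in> D" then show "[a] @ w \<in> D" unfolding Dec_iff by (auto simp: sorted_wrt_append)
  next
    assume h: "[a] @ w \<in> D"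
    then have wA: "set w \<subseteq> A" and wa: "\<forall>y\<in>set w. strict le y a" unfolding Dec_iff by auto
    have "\<forall>x\<in>set s. \<forall>y\<in>set w. strict le y x"
    proof (intro ballI)
      fix x y assume "x \<in> set s" "y \<in> set w"
      then show "strict le y x"
        using strict_trans1[of y a x] wa sa sA wA unfolding strict_def by blast
    qed
    then show "(s @ [a]) @ w \<in> D" using h assms unfolding Dec_iff by (auto simp: sorted_wrt_append)
  qed
qed

lemma rk_last: "s @ [a] \<in> D \<Longrightarrow> rk D (s @ [a]) = ht a"
  unfolding ht_def by (rule rank_subtree[OF wfD]) (use sub_suffix in blast)

lemma ht_equiv:
  assumes "a \<in> A" "b \<in> A" "le a b" "le b a"
  shows "ht a = ht b"
  unfolding ht_def
proof (rule rank_subtree[OF wfD], intro allI)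
  fix w
  have "strict le y a \<longleftrightarrow> strict le y b" if "y \<in> A" for y
    using assms that trans unfolding strict_def by blast
  then show "[a] @ w \<in> D \<longleftrightarrow> [b] @ w \<in> D" using assms unfolding Dec_iff by auto
qed

lemma ht_strict:
  assumes "a \<in> A" "b \<in> A" "strict le a b"
  shows "(ht a, ht b) \<in> bigW \<and> ht a \<noteq> ht b"
proof -
  have "[b] @ [a] \<in> D" "[b] \<in> D" using assms unfolding Dec_iff by auto
  then have "(rk D ([b] @ [a]), rk D [b]) \<in> bigW \<and> rk D ([b] @ [a]) \<noteq> rk D [b]"
    using rank_child_less[OF wfD ch_mem] by blast
  moreover have "rk D ([b] @ [a]) = ht a" using rk_last \<open>[b] @ [a] \<in> D\<close> by blast
  ultimately show ?thesis unfolding ht_def by simp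
qed

lemma ht_le:
  assumes "a \<in> A" "b \<in> A" "le a b"
  shows "(ht a, ht b) \<in> bigW"
proof (cases "le b a")
  case True
  then have "ht a = ht b" using ht_equiv assms by blast
  moreover have "ht b \<in> Field bigW" unfolding ht_def by (rule rank_inField[OF wfD])
  ultimately show ?thesis using WO_D(3)[OF bigW_WO] by simp
next
  case False then show ?thesis using ht_strict assms unfolding strict_def by blast
qed

definition F where "F = underS bigW (rk D [])"

lemma Field_H: "Field (height A le) = F"
  unfolding height_def F_def by (rule Field_tree_height)

lemma H_WO: "Well_order (height A le)"
  unfolding height_def by (rule tree_height_WO)

lemma ht_F: "a \<in> A \<Longrightarrow> ht a \<in> F"
proof -
  assume "a \<in> A"
  then have "[] @ [a] \<in> D" "[] \<in> D" unfolding Dec_iff by auto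
  then have "(rk D ([] @ [a]), rk D []) \<in> bigW \<and> rk D ([] @ [a]) \<noteq> rk D []"
    using rank_child_less[OF wfD ch_mem] by blast
  then show "ht a \<in> F" unfolding F_def ht_def underS_def by simp
qed

lemma F_ht: "y \<in> F \<Longrightarrow> \<exists>a\<in>A. ht a = y"
proof -
  assume "y \<in> F"
  then have "(y, rk D []) \<in> bigW" "y \<noteq> rk D []" unfolding F_def underS_def by auto
  then obtain u where u: "u \<noteq> []" "[] @ u \<in> D" "rk D ([] @ u) = y" using rank_exact[OF wfD Dec_nil] by blast
  then obtain s a where "u = s @ [a]" by (metis rev_exhaust)
  then show ?thesis using u rk_last[of s a] unfolding Dec_iff by auto
qed

lemma F_sub: "F \<subseteq> Field bigW" unfolding F_def underS_def Field_def by auto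

lemma F_down: "y \<in> F \<Longrightarrow> (z, y) \<in> bigW \<Longrightarrow> z \<in> F"
  unfolding F_def underS_def
  using WO_strict_trans2[OF bigW_WO, of z y "rk D []"] by blast

end



context WQ
begin

definition cls where "cls y = {x \<in> A. le x y \<and> le y x}"
definition mx where "mx S y \<longleftrightarrow> y \<in> S \<and> (\<forall>z\<in>S. \<not> strict le y z)"
definition K where "K S \<beta> = cls ` {y. mx S y \<and> ht y = \<beta>}"
definition cnt where "cnt S \<beta> = card (K S \<beta>)"
definition wd where "wd \<beta> = card (cls ` {a \<in> A. ht a = \<beta>})"

lemma cls_eq: "x \<in> A \<Longrightarrow> y \<in> A \<Longrightarrow> cls x = cls y \<longleftrightarrow> le x y \<and> le y x"
proof
  assume xy: "x \<in> A" "y \<in> A" "cls x = cls y"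
  have "x \<in> cls x" using xy lrefl unfolding cls_def by auto
  then show "le x y \<and> le y x" using xy unfolding cls_def by auto
next
  assume xy: "x \<in> A" "y \<in> A" "le x y \<and> le y x"
  show "cls x = cls y" unfolding cls_def using xy trans by blast
qed

lemma strict_irrefl: "\<not> strict le x x" unfolding strict_def by simp

lemma ht_inField: "ht a \<in> Field bigW" unfolding ht_def by (rule rank_inField[OF wfD])

lemma exists_max:
  assumes S: "finite S" "S \<subseteq> A" and x: "x \<in> S"
  shows "\<exists>y. mx S y \<and> le x y"
proof -
  let ?U = "{z \<in> S. le x z}"
  have U: "finite ?U" "?U \<noteq> {}" using S x lrefl by auto
  have "finite (ht ` ?U)" using U(1) by (rule finite_imageI)
  moreover have "ht ` ?U \<noteq> {}" using U(2) by simp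
  moreover have "ht ` ?U \<subseteq> Field bigW" by (rule image_subsetI) (rule ht_inField)
  ultimately have "\<exists>h\<in>ht ` ?U. \<forall>g\<in>ht ` ?U. (g, h) \<in> bigW" by (rule finite_max_WO[OF bigW_WO])
  then obtain h where h: "h \<in> ht ` ?U" "\<forall>g\<in>ht ` ?U. (g, h) \<in> bigW" by (elim bexE) (rule that)
  then obtain y where y: "y \<in> ?U" "ht y = h" by auto
  have "mx S y"
    unfolding mx_def
  proof (intro conjI ballI)
    show "y \<in> S" using y by auto
    fix z assume z: "z \<in> S"
    show "\<not> strict le y z"
    proof
      assume yz: "strict le y z"
      have xyz: "x \<in> A" "y \<in> A" "z \<in> A" using x y z S by auto
      have "le y z" using yz unfolding strict_def by simp
      moreover have "le x y" using y by simp
      ultimately have "le x z" using trans[OF xyz] by simp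
      then have "(ht z, h) \<in> bigW" using h z by auto
      moreover have "(ht y, ht z) \<in> bigW \<and> ht y \<noteq> ht z" using ht_strict yz y z S by blast
      ultimately show False using y WO_D(2)[OF bigW_WO] unfolding antisym_def by blast
    qed
  qed
  then show ?thesis using y by auto
qed

lemma mx_A: "S \<subseteq> A \<Longrightarrow> mx S y \<Longrightarrow> y \<in> A" unfolding mx_def by auto

lemma K_finite: "finite S \<Longrightarrow> finite (K S \<beta>)"
proof -
  assume "finite S"
  moreover have "{y. mx S y \<and> ht y = \<beta>} \<subseteq> S" unfolding mx_def by auto
  ultimately show ?thesis unfolding K_def by (meson finite_imageI finite_subset)
qed

lemma level_cmp:
  assumes S: "finite S" "S \<subseteq> A" and S': "finite S'" "S' \<subseteq> A"
    and h1: "hoare le S' S" and h2: "\<not> hoare le S S'"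
  shows "\<exists>\<beta>. \<beta> \<in> F \<and> K S' \<beta> \<subset> K S \<beta> \<and> (\<forall>\<gamma>. (\<beta>, \<gamma>) \<in> bigW \<longrightarrow> \<beta> \<noteq> \<gamma> \<longrightarrow> K S' \<gamma> = K S \<gamma>)"
proof -
  define M where "M = cls ` {y. mx S y}"
  define M' where "M' = cls ` {y. mx S' y}"
  define Bad where "Bad = {y. (mx S y \<and> cls y \<notin> M') \<or> (mx S' y \<and> cls y \<notin> M)}"
  have BadSub: "Bad \<subseteq> S \<union> S'" unfolding Bad_def mx_def by auto
  have BadA: "Bad \<subseteq> A" using BadSub S S' by auto
  have Bne: "Bad \<noteq> {}"
  proof
    assume B0: "Bad = {}"
    have "hoare le S S'"
      unfolding hoare_def
    proof
      fix x assume x: "x \<in> S"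
      obtain y where y: "mx S y" "le x y" using exists_max[OF S x] by blast
      then have "cls y \<in> M'" using B0 unfolding Bad_def by auto
      then obtain y' where y': "mx S' y'" "cls y = cls y'" unfolding M'_def by auto
      have yA: "y \<in> A" "y' \<in> A" "x \<in> A" using y y' S S' x mx_A by auto
      then have "le y y'" using cls_eq[OF yA(1,2)] y'(2) by simp
      then have "le x y'" using trans[OF yA(3) yA(1) yA(2) y(2)] by simp
      then show "\<exists>b\<in>S'. le x b" using y' unfolding mx_def by auto
    qed
    then show False using h2 by simp
  qed
  have "finite (S \<union> S')" using S S' by simp
  then have "finite Bad" using BadSub by (rule finite_subset[rotated])
  then have "finite (ht ` Bad)" by (rule finite_imageI)
  moreover have "ht ` Bad \<noteq> {}" using Bne by simp
  moreover have "ht ` Bad \<subseteq> Field bigW" by (rule image_subsetI) (rule ht_inField)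
  ultimately have "\<exists>h\<in>ht ` Bad. \<forall>g\<in>ht ` Bad. (g, h) \<in> bigW" by (rule finite_max_WO[OF bigW_WO])
  then obtain \<beta> where \<beta>: "\<beta> \<in> ht ` Bad" "\<forall>g\<in>ht ` Bad. (g, \<beta>) \<in> bigW" by (elim bexE) (rule that)
  have above: "cls y \<in> M' \<and> cls y \<in> M" if "y \<in> S \<union> S'" "mx S y \<or> mx S' y" "(\<beta>, ht y) \<in> bigW" "\<beta> \<noteq> ht y" for y
  proof (rule ccontr)
    assume "\<not> ?thesis"
    then have "y \<in> Bad" using that unfolding Bad_def M_def M'_def by auto
    then have "(ht y, \<beta>) \<in> bigW" using \<beta> by auto
    then show False using that WO_D(2)[OF bigW_WO] unfolding antisym_def by blast
  qed
  have Kup: "K S' \<gamma> = K S \<gamma>" if g: "(\<beta>, \<gamma>) \<in> bigW" "\<beta> \<noteq> \<gamma>" for \<gamma>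
  proof (intro equalityI subsetI)
    fix k assume "k \<in> K S' \<gamma>"
    then obtain y where y: "mx S' y" "ht y = \<gamma>" "k = cls y" unfolding K_def by auto
    then have "cls y \<in> M" using above[of y] g unfolding mx_def by auto
    then obtain z where z: "mx S z" "cls y = cls z" unfolding M_def by auto
    have yzA: "y \<in> A" "z \<in> A" using y z S S' mx_A by auto
    then have "le y z \<and> le z y" using cls_eq[OF yzA] z(2) by simp
    then have "ht z = \<gamma>" using ht_equiv[OF yzA] y(2) by simp
    then show "k \<in> K S \<gamma>" using z y unfolding K_def by auto
  next
    fix k assume "k \<in> K S \<gamma>"
    then obtain y where y: "mx S y" "ht y = \<gamma>" "k = cls y" unfolding K_def by auto
    then have "cls y \<in> M'" using above[of y] g unfolding mx_def by auto
    then obtain z where z: "mx S' z" "cls y = cls z" unfolding M'_def by auto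
    have yzA: "y \<in> A" "z \<in> A" using y z S S' mx_A by auto
    then have "le y z \<and> le z y" using cls_eq[OF yzA] z(2) by simp
    then have "ht z = \<gamma>" using ht_equiv[OF yzA] y(2) by simp
    then show "k \<in> K S' \<gamma>" using z y unfolding K_def by auto
  qed
  have Ksub: "K S' \<beta> \<subseteq> K S \<beta>"
  proof
    fix k assume "k \<in> K S' \<beta>"
    then obtain y' where y': "mx S' y'" "ht y' = \<beta>" "k = cls y'" unfolding K_def by auto
    have y'A: "y' \<in> A" using y' S' mx_A by auto
    obtain z where z: "z \<in> S" "le y' z" using h1 y' unfolding hoare_def mx_def by auto
    obtain y where y: "mx S y" "le z y" using exists_max[OF S z(1)] by blast
    have yA: "y \<in> A" "z \<in> A" using y z S mx_A by auto
    have le1: "le y' y" using trans[OF y'A yA(2) yA(1) z(2) y(2)] .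
    show "k \<in> K S \<beta>"
    proof (cases "le y y'")
      case True
      then have "cls y' = cls y" using cls_eq[OF y'A yA(1)] le1 by simp
      moreover have "ht y = \<beta>" using ht_equiv[OF y'A yA(1) le1 True] y'(2) by simp
      ultimately show ?thesis using y y'(3) unfolding K_def by auto
    next
      case False
      then have st: "strict le y' y" using le1 unfolding strict_def by simp
      then have "(\<beta>, ht y) \<in> bigW" "\<beta> \<noteq> ht y" using ht_strict y'A yA y' by auto
      then have "cls y \<in> M'" using above[of y] y unfolding mx_def by auto
      then obtain y'' where y'': "mx S' y''" "cls y = cls y''" unfolding M'_def by auto
      have y''A: "y'' \<in> A" using y'' S' mx_A by auto
      then have "le y y''" using cls_eq[OF yA(1) y''A] y''(2) by simp
      then have "strict le y' y''" using strict_trans1[OF y'A yA(1) y''A st] by simp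
      then show ?thesis using y' y'' unfolding mx_def by auto
    qed
  qed
  obtain b where b: "b \<in> Bad" "ht b = \<beta>" using \<beta> by auto
  have bA: "b \<in> A" using b BadA by auto
  have "K S' \<beta> \<noteq> K S \<beta>"
  proof (cases "mx S b \<and> cls b \<notin> M'")
    case True
    then have "cls b \<in> K S \<beta>" using b unfolding K_def by auto
    moreover have "cls b \<notin> K S' \<beta>" using True unfolding K_def M'_def by auto
    ultimately show ?thesis by auto
  next
    case False
    then have bb: "mx S' b" "cls b \<notin> M" using b unfolding Bad_def by auto
    then have "cls b \<in> K S' \<beta>" using b unfolding K_def by auto
    moreover have "K S \<beta> \<subseteq> M" unfolding K_def M_def by auto
    ultimately show ?thesis using Ksub bb by auto
  qed
  then have "K S' \<beta> \<subset> K S \<beta>" using Ksub by auto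
  moreover have "\<beta> \<in> F" using b bA ht_F by auto
  ultimately show ?thesis using Kup by blast
qed

lemma wd_finite: "finite (cls ` {a \<in> A. ht a = \<beta>})"
proof (rule ccontr)
  assume inf: "infinite (cls ` {a \<in> A. ht a = \<beta>})"
  have "\<exists>f :: nat \<Rightarrow> 'a set. inj f \<and> range f \<subseteq> cls ` {a \<in> A. ht a = \<beta>}"
    using infinite_iff_countable_subset[THEN iffD1, OF inf] .
  then obtain k :: "nat \<Rightarrow> 'a set" where k: "inj k" "range k \<subseteq> cls ` {a \<in> A. ht a = \<beta>}"
    by (elim exE conjE) (rule that)
  have "\<forall>i. \<exists>a. a \<in> A \<and> ht a = \<beta> \<and> cls a = k i"
  proof
    fix i
    have "k i \<in> cls ` {a \<in> A. ht a = \<beta>}" using k(2) by (rule subsetD) simp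
    then show "\<exists>a. a \<in> A \<and> ht a = \<beta> \<and> cls a = k i" by auto
  qed
  then have "\<exists>a. \<forall>i. a i \<in> A \<and> ht (a i) = \<beta> \<and> cls (a i) = k i" by (rule choice)
  then obtain a where a0: "\<forall>i. a i \<in> A \<and> ht (a i) = \<beta> \<and> cls (a i) = k i" by (elim exE)
  have a: "\<And>i. a i \<in> A" "\<And>i. ht (a i) = \<beta>" "\<And>i. cls (a i) = k i" using a0 by auto
  obtain i j where ij: "i < j" "le (a i) (a j)" using good[of a] a by blast
  show False
  proof (cases "le (a j) (a i)")
    case True
    then have "cls (a i) = cls (a j)" using cls_eq[OF a(1) a(1)] ij by simp
    then have "k i = k j" using a(3) by simp
    then show False using k(1) ij unfolding inj_def by auto
  next
    case False
    then have "ht (a i) \<noteq> ht (a j)" using ht_strict a ij unfolding strict_def by blast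
    then show False using a by simp
  qed
qed

lemma cnt_le_wd: "finite S \<Longrightarrow> S \<subseteq> A \<Longrightarrow> cnt S \<beta> \<le> wd \<beta>"
proof -
  assume S: "finite S" "S \<subseteq> A"
  have "K S \<beta> \<subseteq> cls ` {a \<in> A. ht a = \<beta>}" unfolding K_def mx_def using S by auto
  then show ?thesis unfolding cnt_def wd_def by (rule card_mono[OF wd_finite])
qed

lemma cnt_less:
  assumes S: "finite S" "S \<subseteq> A" and S': "finite S'" "S' \<subseteq> A"
    and h1: "hoare le S' S" and h2: "\<not> hoare le S S'"
  shows "\<exists>\<beta>. \<beta> \<in> F \<and> cnt S' \<beta> < cnt S \<beta> \<and> (\<forall>\<gamma>. (\<beta>, \<gamma>) \<in> bigW \<longrightarrow> \<beta> \<noteq> \<gamma> \<longrightarrow> cnt S' \<gamma> = cnt S \<gamma>)"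
proof -
  obtain \<beta> where \<beta>: "\<beta> \<in> F" "K S' \<beta> \<subset> K S \<beta>" "\<forall>\<gamma>. (\<beta>, \<gamma>) \<in> bigW \<longrightarrow> \<beta> \<noteq> \<gamma> \<longrightarrow> K S' \<gamma> = K S \<gamma>"
    using level_cmp[OF S S' h1 h2] by blast
  have "cnt S' \<beta> < cnt S \<beta>" unfolding cnt_def using psubset_card_mono[OF K_finite[OF S(1)] \<beta>(2)] .
  moreover have "\<forall>\<gamma>. (\<beta>, \<gamma>) \<in> bigW \<longrightarrow> \<beta> \<noteq> \<gamma> \<longrightarrow> cnt S' \<gamma> = cnt S \<gamma>" using \<beta>(3) unfolding cnt_def by simp
  ultimately show ?thesis using \<beta>(1) by blast
qed

lemma cnt_zero: "\<beta> \<notin> ht ` S \<Longrightarrow> cnt S \<beta> = 0"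
proof -
  assume "\<beta> \<notin> ht ` S"
  then have "{y. mx S y \<and> ht y = \<beta>} = {}" unfolding mx_def by auto
  then have "K S \<beta> = {}" unfolding K_def by (simp only: image_empty)
  then show ?thesis unfolding cnt_def by simp
qed

end



definition nxt :: "'n list set \<Rightarrow> 'n list set" where
  "nxt x = wo_rel.suc bigW {x}"

definition itr :: "'n list set \<Rightarrow> nat \<Rightarrow> 'n list set" where
  "itr b k = (nxt ^^ k) b"

definition isbase :: "'n list set \<Rightarrow> bool" where
  "isbase b \<longleftrightarrow> b \<in> Field bigW \<and> (\<forall>p\<in>Field bigW. nxt p \<noteq> b)"

abbreviation lt :: "'n list set \<Rightarrow> 'n list set \<Rightarrow> bool" where
  "lt x y \<equiv> (x, y) \<in> bigW \<and> x \<noteq> y"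

lemma lt_trans: "lt x y \<Longrightarrow> lt y z \<Longrightarrow> lt x z"
  using WO_strict_trans[OF bigW_WO] by blast

lemma le_lt_trans: "(x, y) \<in> bigW \<Longrightarrow> lt y z \<Longrightarrow> lt x z"
  using WO_strict_trans2[OF bigW_WO] by blast

lemma lt_le_trans: "lt x y \<Longrightarrow> (y, z) \<in> bigW \<Longrightarrow> lt x z"
  using WO_strict_trans[OF bigW_WO] by blast

lemma lt_irrefl: "\<not> lt x x" by simp

lemma lt_asym: "lt x y \<Longrightarrow> (y, x) \<in> bigW \<Longrightarrow> False"
  using WO_D(2)[OF bigW_WO] unfolding antisym_def by blast

lemma total: "x \<in> Field bigW \<Longrightarrow> y \<in> Field bigW \<Longrightarrow> lt x y \<or> x = y \<or> lt y x"
  using WO_D(4)[OF bigW_WO] by blast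

lemma not_lt: "x \<in> Field bigW \<Longrightarrow> y \<in> Field bigW \<Longrightarrow> \<not> lt x y \<Longrightarrow> (y, x) \<in> bigW"
  using total[of x y] WO_D(3)[OF bigW_WO] by blast

lemma nxt_props:
  assumes x: "x \<in> Field (bigW :: 'n list set rel)"
  shows "lt x (nxt x) \<and> nxt x \<in> Field bigW"
proof -
  have sub: "{x} \<subseteq> Field (bigW :: 'n list set rel)" using x by simp
  have "|{x}| \<le>o |UNIV :: 'n list set|"
    by (rule card_of_ordLeq[THEN iffD1]) (rule exI[of _ "\<lambda>_. []"], simp)
  then obtain i where i: "i \<in> Field (bigW :: 'n list set rel)" "\<forall>b\<in>{x}. (b,i) \<in> bigW \<and> b \<noteq> i"
    using bigW_bounded[OF sub] by blast
  have "i \<in> AboveS bigW {x}" using i unfolding AboveS_def by auto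
  then have A: "AboveS bigW {x} \<noteq> {}" by blast
  have "nxt x \<noteq> x \<and> (x, nxt x) \<in> bigW" unfolding nxt_def
    by (rule wo_rel.suc_greater[OF bigW_wo_rel sub A]) simp
  moreover have "nxt x \<in> Field bigW" unfolding nxt_def by (rule wo_rel.suc_inField[OF bigW_wo_rel sub A])
  ultimately show ?thesis by auto
qed

lemma nxt_least:
  assumes "lt x y"
  shows "(nxt x, y) \<in> bigW"
proof -
  have "y \<in> Field bigW" using assms FieldI2 by metis
  then have "y \<in> AboveS bigW {x}" using assms unfolding AboveS_def by auto
  then show ?thesis unfolding nxt_def by (rule wo_rel.suc_least_AboveS[OF bigW_wo_rel])
qed

lemma itr_0[simp]: "itr b 0 = b" unfolding itr_def by simp
lemma itr_Suc: "itr b (Suc k) = nxt (itr b k)" unfolding itr_def by simp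

lemma itr_Field: "b \<in> Field bigW \<Longrightarrow> itr b k \<in> Field bigW"
  by (induction k) (auto simp: itr_Suc nxt_props)

lemma itr_step: "b \<in> Field bigW \<Longrightarrow> lt (itr b k) (itr b (Suc k))"
  unfolding itr_Suc using nxt_props itr_Field by blast

lemma itr_mono: "b \<in> Field bigW \<Longrightarrow> k < k' \<Longrightarrow> lt (itr b k) (itr b k')"
proof (induction k')
  case 0 then show ?case by simp
next
  case (Suc k')
  show ?case
  proof (cases "k = k'")
    case True then show ?thesis using itr_step[OF Suc(2)] by simp
  next
    case False
    then have "lt (itr b k) (itr b k')" using Suc by simp
    then show ?thesis using itr_step[OF Suc(2), of k'] lt_trans by blast
  qed
qed

lemma itr_le: "b \<in> Field bigW \<Longrightarrow> k \<le> k' \<Longrightarrow> (itr b k, itr b k') \<in> bigW"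
  using itr_mono[of b k k'] WO_D(3)[OF bigW_WO] itr_Field
  by (cases "k = k'") auto

lemma decomp:
  assumes "x \<in> Field bigW"
  shows "\<exists>b k. isbase b \<and> x = itr b k"
  using WO_D(5)[OF bigW_WO] assms
proof (induction x rule: wf_induct_rule)
  case (less x)
  show ?case
  proof (cases "isbase x")
    case True then show ?thesis by (intro exI[of _ x] exI[of _ 0]) simp
  next
    case False
    then obtain p where p: "p \<in> Field bigW" "nxt p = x" using less(2) unfolding isbase_def by blast
    have "lt p x" using nxt_props[OF p(1)] p(2) by simp
    then have "(p, x) \<in> bigW - Id" by simp
    then obtain b k where "isbase b" "p = itr b k" using less(1) p(1) by blast
    then show ?thesis using p(2) by (intro exI[of _ b] exI[of _ "Suc k"]) (simp add: itr_Suc)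
  qed
qed

lemma below_base:
  assumes b': "isbase b'" and bb: "lt b b'"
  shows "lt (itr b k) b'"
proof (induction k)
  case 0 then show ?case using bb by simp
next
  case (Suc k)
  have F: "itr b k \<in> Field bigW" using Suc FieldI1 by metis
  have "(nxt (itr b k), b') \<in> bigW" using nxt_least[OF Suc] .
  moreover have "nxt (itr b k) \<noteq> b'" using b' F unfolding isbase_def by blast
  ultimately show ?case by (simp add: itr_Suc)
qed

lemma base_cmp:
  assumes "isbase b" "isbase b'" "lt b b'"
  shows "lt (itr b k) (itr b' k')"
proof -
  have 1: "lt (itr b k) b'" using below_base assms by blast
  have "(b', itr b' k') \<in> bigW" using itr_le[of b' 0 k'] assms(2) unfolding isbase_def by simp
  then show ?thesis using lt_le_trans[OF 1] by blast
qed

lemma itr_unique: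
  assumes "isbase b" "isbase b'" "itr b k = itr b' k'"
  shows "b = b' \<and> k = k'"
proof -
  have bF: "b \<in> Field bigW" "b' \<in> Field bigW" using assms unfolding isbase_def by auto
  have "b = b'"
  proof (rule ccontr)
    assume "b \<noteq> b'"
    then have "lt b b' \<or> lt b' b" using total bF by blast
    then show False using base_cmp assms by (metis lt_irrefl)
  qed
  moreover have "k = k'"
  proof (rule ccontr)
    assume "k \<noteq> k'"
    then have "k < k' \<or> k' < k" by arith
    then show False using itr_mono bF \<open>b = b'\<close> assms(3) by (metis lt_irrefl)
  qed
  ultimately show ?thesis by simp
qed

definition bs :: "'n list set \<Rightarrow> 'n list set" where
  "bs x = (SOME b. isbase b \<and> (\<exists>k. x = itr b k))"
definition ix :: "'n list set \<Rightarrow> nat" where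
  "ix x = (SOME k. x = itr (bs x) k)"

lemma bs_ix:
  assumes "x \<in> Field bigW"
  shows "isbase (bs x) \<and> x = itr (bs x) (ix x)"
proof -
  have "\<exists>b. isbase b \<and> (\<exists>k. x = itr b k)" using decomp[OF assms] by blast
  then have 1: "isbase (bs x) \<and> (\<exists>k. x = itr (bs x) k)" unfolding bs_def by (rule someI_ex)
  then have "x = itr (bs x) (ix x)" unfolding ix_def by (metis (mono_tags) someI_ex)
  then show ?thesis using 1 by simp
qed

lemma bs_itr: "isbase b \<Longrightarrow> bs (itr b k) = b \<and> ix (itr b k) = k"
proof -
  assume b: "isbase b"
  have F: "itr b k \<in> Field bigW" using itr_Field b unfolding isbase_def by blast
  show ?thesis using bs_ix[OF F] itr_unique[OF b, of "bs (itr b k)" k "ix (itr b k)"] by metis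
qed

lemma lt_cases:
  assumes x: "x \<in> Field bigW" and y: "y \<in> Field bigW" and xy: "lt x y"
  shows "lt (bs x) (bs y) \<or> (bs x = bs y \<and> ix x < ix y)"
proof -
  have bx: "isbase (bs x)" "x = itr (bs x) (ix x)" and yb: "isbase (bs y)" "y = itr (bs y) (ix y)"
    using bs_ix x y by auto
  have bF: "bs x \<in> Field bigW" "bs y \<in> Field bigW" using bx(1) yb(1) unfolding isbase_def by auto
  show ?thesis
  proof (cases "bs x = bs y")
    case True
    have "ix x < ix y"
    proof (rule ccontr)
      assume "\<not> ix x < ix y"
      then have "(itr (bs y) (ix y), itr (bs x) (ix x)) \<in> bigW" using itr_le[OF bF(1)] True by simp
      then show False using xy bx(2) yb(2) lt_asym by metis
    qed
    then show ?thesis using True by simp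
  next
    case False
    then have "lt (bs x) (bs y) \<or> lt (bs y) (bs x)" using total bF by blast
    moreover have "\<not> lt (bs y) (bs x)"
    proof
      assume "lt (bs y) (bs x)"
      then have "lt (itr (bs y) (ix y)) (itr (bs x) (ix x))" using base_cmp yb(1) bx(1) by blast
      then show False using xy bx(2) yb(2) lt_asym by metis
    qed
    ultimately show ?thesis by blast
  qed
qed



lemma digits_bound:
  fixes d :: "nat \<Rightarrow> nat"
  assumes "\<forall>k<K. d k < M"
  shows "(\<Sum>k<K. d k * M ^ k) < M ^ K"
  using assms
proof (induction K)
  case 0 then show ?case by simp
next
  case (Suc K)
  have IH: "(\<Sum>k<K. d k * M ^ k) < M ^ K" using Suc by simp
  have "d K < M" using Suc by simp
  then have "d K * M ^ K + M ^ K \<le> M * M ^ K"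
    by (metis Suc_leI add.commute mult.commute mult_Suc_right mult_le_mono1)
  then show ?case using IH by simp
qed

lemma digits_less:
  fixes d d' :: "nat \<Rightarrow> nat"
  assumes "\<forall>k<K. d k < M" "\<forall>k<K. d' k < M" "n < K" "d' n < d n"
    "\<forall>k. n < k \<longrightarrow> k < K \<longrightarrow> d' k = d k"
  shows "(\<Sum>k<K. d' k * M ^ k) < (\<Sum>k<K. d k * M ^ k)"
  using assms
proof (induction K)
  case 0 then show ?case by simp
next
  case (Suc K)
  show ?case
  proof (cases "n = K")
    case True
    have b: "(\<Sum>k<K. d' k * M ^ k) < M ^ K" using digits_bound[of K d' M] Suc.prems by simp
    have "Suc (d' K) \<le> d K" using Suc.prems True by simp
    then have "M ^ K + d' K * M ^ K \<le> d K * M ^ K"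
      by (metis add.commute mult.commute mult_Suc_right mult_le_mono2)
    then have "(\<Sum>k<Suc K. d' k * M ^ k) < d K * M ^ K" using b by simp
    also have "\<dots> \<le> (\<Sum>k<Suc K. d k * M ^ k)" by simp
    finally show ?thesis .
  next
    case False
    then have "n < K" using Suc.prems by simp
    then have "(\<Sum>k<K. d' k * M ^ k) < (\<Sum>k<K. d k * M ^ k)" using Suc by simp
    moreover have "d' K = d K" using Suc.prems \<open>n < K\<close> by simp
    ultimately show ?thesis by simp
  qed
qed



context WQ
begin

lemma H_eq: "height A le = Restr bigW F"
  unfolding height_def tree_height_def F_def by simp

lemma F_Field: "x \<in> F \<Longrightarrow> x \<in> Field bigW" using F_sub by blast

definition ib where "ib x \<longleftrightarrow> (\<forall>k. itr (bs x) k \<in> F)"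
definition N where "N b n = (\<Sum>k<n. wd (itr b k))"
definition pos where "pos x i = itr (bs x) (N (bs x) (ix x) + i)"
definition X where "X S = {pos x i | x i. x \<in> F \<and> ib x \<and> i < cnt S x}"

lemma bsF: "x \<in> F \<Longrightarrow> isbase (bs x) \<and> x = itr (bs x) (ix x) \<and> bs x \<in> Field bigW"
  using bs_ix[OF F_Field] unfolding isbase_def by blast

lemma pos_F: "x \<in> F \<Longrightarrow> ib x \<Longrightarrow> pos x i \<in> F"
  unfolding pos_def ib_def by blast

lemma pos_lt1: assumes "x \<in> F" "i < i'" shows "lt (pos x i) (pos x i')"
proof -
  have "bs x \<in> Field bigW" using bsF[OF assms(1)] by blast
  then show ?thesis unfolding pos_def by (rule itr_mono) (simp add: assms(2))
qed

lemma pos_le1: assumes "x \<in> F" "i \<le> i'" shows "(pos x i, pos x i') \<in> bigW"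
proof -
  have "bs x \<in> Field bigW" using bsF[OF assms(1)] by blast
  then show ?thesis unfolding pos_def by (rule itr_le) (simp add: assms(2))
qed

lemma N_mono: "n \<le> n' \<Longrightarrow> N b n \<le> N b n'"
  unfolding N_def by (rule sum_mono2) auto

lemma pos_lt2:
  assumes x: "x \<in> F" and x': "x' \<in> F" and xx: "lt x x'" and i: "i < wd x"
  shows "lt (pos x i) (pos x' i')"
proof -
  have bx: "isbase (bs x)" "x = itr (bs x) (ix x)" "bs x \<in> Field bigW" using bsF[OF x] by auto
  have bx': "isbase (bs x')" "x' = itr (bs x') (ix x')" using bsF[OF x'] by auto
  have "lt (bs x) (bs x') \<or> (bs x = bs x' \<and> ix x < ix x')" using lt_cases F_Field x x' xx by blast
  then show ?thesis
  proof
    assume "lt (bs x) (bs x')"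
    then show ?thesis unfolding pos_def using base_cmp bx(1) bx'(1) by blast
  next
    assume h: "bs x = bs x' \<and> ix x < ix x'"
    let ?b = "bs x"
    have w: "wd (itr ?b (ix x)) = wd x" using bx(2) by simp
    have "N ?b (ix x) + i < N ?b (Suc (ix x))" unfolding N_def using i w by simp
    also have "\<dots> \<le> N ?b (ix x')" using N_mono h by simp
    finally have "N ?b (ix x) + i < N ?b (ix x') + i'" by simp
    then show ?thesis unfolding pos_def using itr_mono[OF bx(3)] h by simp
  qed
qed

lemma X_finite: "finite S \<Longrightarrow> finite (X S)"
proof -
  assume S: "finite S"
  have "X S \<subseteq> (\<lambda>(x,i). pos x i) ` (SIGMA x: ht ` S. {..<cnt S x})"
  proof
    fix z assume "z \<in> X S"
    then obtain x i where z: "z = pos x i" "x \<in> F" "ib x" "i < cnt S x" unfolding X_def by blast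
    have "x \<in> ht ` S" using cnt_zero z(4) by (metis less_nat_zero_code)
    then show "z \<in> (\<lambda>(x,i). pos x i) ` (SIGMA x: ht ` S. {..<cnt S x})" using z by force
  qed
  moreover have "finite (SIGMA x: ht ` S. {..<cnt S x})" using S by (intro finite_SigmaI) auto
  ultimately show ?thesis using finite_subset by blast
qed

lemma X_sub: "X S \<subseteq> F"
  unfolding X_def using pos_F by blast

lemma X_Field: "finite S \<Longrightarrow> X S \<in> Field (two_pow (height A le))"
  using Field_two_pow[OF H_WO] X_finite X_sub Field_H by simp

lemma X_less:
  assumes S: "finite S" "S \<subseteq> A" and S': "finite S'" "S' \<subseteq> A"
    and \<beta>: "\<beta> \<in> F" "ib \<beta>" "cnt S' \<beta> < cnt S \<beta>" "\<forall>\<gamma>. (\<beta>, \<gamma>) \<in> bigW \<longrightarrow> \<beta> \<noteq> \<gamma> \<longrightarrow> cnt S' \<gamma> = cnt S \<gamma>"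
  shows "(X S', X S) \<in> two_pow (height A le) \<and> X S' \<noteq> X S"
proof -
  define c where "c = cnt S \<beta>"
  define x0 where "x0 = pos \<beta> (c - 1)"
  have c0: "c - 1 < c" using \<beta>(3) unfolding c_def by simp
  have cw: "c \<le> wd \<beta>" unfolding c_def using cnt_le_wd S by blast
  have x0S: "x0 \<in> X S" unfolding x0_def X_def c_def using \<beta> c0 c_def by blast
  have x0F: "x0 \<in> F" using x0S X_sub by blast
  have x0S': "x0 \<notin> X S'"
  proof
    assume "x0 \<in> X S'"
    then obtain \<gamma> i where g: "x0 = pos \<gamma> i" "\<gamma> \<in> F" "ib \<gamma>" "i < cnt S' \<gamma>" unfolding X_def by blast
    have iw: "i < wd \<gamma>" using g(4) cnt_le_wd S' by (meson less_le_trans)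
    consider "\<gamma> = \<beta>" | "lt \<gamma> \<beta>" | "lt \<beta> \<gamma>" using total F_Field g(2) \<beta>(1) by blast
    then show False
    proof cases
      case 1
      then have "i = c - 1" using g(1) x0_def pos_lt1[OF \<beta>(1)] by (metis linorder_neqE_nat)
      then show False using g(4) 1 \<beta>(3) unfolding c_def by simp
    next
      case 2
      then have "lt (pos \<gamma> i) (pos \<beta> (c - 1))" using pos_lt2 g(2) \<beta>(1) iw by blast
      then show False using g(1) x0_def by simp
    next
      case 3
      have "c - 1 < wd \<beta>" using c0 cw by simp
      then have "lt (pos \<beta> (c - 1)) (pos \<gamma> i)" using pos_lt2 g(2) \<beta>(1) 3 by blast
      then show False using g(1) x0_def by simp
    qed
  qed
  have dom: "(z, x0) \<in> bigW" if z: "z \<in> (X S' - X S) \<union> (X S - X S')" for z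
  proof -
    obtain \<gamma> i where g: "z = pos \<gamma> i" "\<gamma> \<in> F" "ib \<gamma>" "i < cnt S' \<gamma> \<or> i < cnt S \<gamma>"
      using z unfolding X_def by blast
    have iw: "i < wd \<gamma>" using g(4) cnt_le_wd S S' by (meson less_le_trans)
    consider "\<gamma> = \<beta>" | "lt \<gamma> \<beta>" | "lt \<beta> \<gamma>" using total F_Field g(2) \<beta>(1) by blast
    then show ?thesis
    proof cases
      case 1
      show ?thesis
      proof (cases "z \<in> X S")
        case True
        then have "z \<notin> X S'" using z by blast
        then have "\<not> i < cnt S' \<beta>" using g 1 unfolding X_def by blast
        then have "i < c" using g(4) 1 unfolding c_def by auto
        then have "i \<le> c - 1" by simp
        then show ?thesis using pos_le1[OF \<beta>(1)] g(1) 1 x0_def by simp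
      next
        case False
        then have "\<not> i < cnt S \<beta>" using g 1 unfolding X_def by blast
        then have "\<not> i < cnt S' \<beta>" using \<beta>(3) by simp
        then show ?thesis using g(4) 1 \<open>\<not> i < cnt S \<beta>\<close> by simp
      qed
    next
      case 2
      then have "lt (pos \<gamma> i) (pos \<beta> (c - 1))" using pos_lt2 g(2) \<beta>(1) iw by blast
      then show ?thesis using g(1) x0_def by simp
    next
      case 3
      then have "cnt S' \<gamma> = cnt S \<gamma>" using \<beta>(4) by blast
      then have ii: "i < cnt S \<gamma>" "i < cnt S' \<gamma>" using g(4) by auto
      have "z \<in> X S" unfolding X_def using g(1,2,3) ii(1) by blast
      moreover have "z \<in> X S'" unfolding X_def using g(1,2,3) ii(2) by blast
      ultimately have "z \<in> X S \<and> z \<in> X S'" by blast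
      then show ?thesis using z by blast
    qed
  qed
  have zF: "z \<in> F" if "z \<in> (X S' - X S) \<union> (X S - X S')" for z using that X_sub by blast
  have "(X S', X S) \<in> two_pow (Restr bigW F)"
    unfolding two_pow_def
  proof (intro CollectI case_prodI conjI disjI2 bexI[of _ x0] ballI)
    show "finite (X S')" "finite (X S)" using X_finite S S' by auto
    show "X S' \<subseteq> Field (Restr bigW F)" "X S \<subseteq> Field (Restr bigW F)" using X_sub Field_H H_eq by auto
    show "x0 \<in> X S - X S'" using x0S x0S' by blast
    fix y assume "y \<in> (X S' - X S) \<union> (X S - X S')"
    then show "(y, x0) \<in> Restr bigW F" using dom zF x0F by blast
  qed
  then show ?thesis using H_eq x0S x0S' by auto
qed

end



context WQ
begin

definition NI where "NI = {x \<in> F. \<not> ib x}"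

lemma base_le: "x \<in> F \<Longrightarrow> (bs x, x) \<in> bigW"
proof -
  assume x: "x \<in> F"
  have b: "bs x \<in> Field bigW" "x = itr (bs x) (ix x)" using bsF[OF x] by auto
  have "(itr (bs x) 0, itr (bs x) (ix x)) \<in> bigW" by (rule itr_le[OF b(1)]) simp
  then show ?thesis using b(2) by simp
qed

lemma low_base_ib:
  assumes b: "isbase b" "isbase b'" "lt b b'" and y: "y \<in> F" "(b', y) \<in> bigW"
  shows "\<forall>k. itr b k \<in> F"
proof
  fix k
  have "lt (itr b k) b'" by (rule below_base[OF b(2,3)])
  then have "(itr b k, y) \<in> bigW" using lt_le_trans y(2) by blast
  then show "itr b k \<in> F" using F_down y(1) by blast
qed

lemma ni_above:
  assumes x: "x \<in> F" "ib x" and y: "y \<in> NI"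
  shows "lt x y"
proof -
  have yF: "y \<in> F" "\<not> ib y" using y unfolding NI_def by auto
  have bx: "isbase (bs x)" "x = itr (bs x) (ix x)" "bs x \<in> Field bigW" using bsF[OF x(1)] by auto
  have yb: "isbase (bs y)" "y = itr (bs y) (ix y)" "bs y \<in> Field bigW" using bsF[OF yF(1)] by auto
  have ne: "bs x \<noteq> bs y" using x(2) yF(2) unfolding ib_def by metis
  have "\<not> lt (bs y) (bs x)"
  proof
    assume "lt (bs y) (bs x)"
    then have "\<forall>k. itr (bs y) k \<in> F" using low_base_ib[OF yb(1) bx(1) _ x(1) base_le[OF x(1)]] by blast
    then show False using yF(2) unfolding ib_def by blast
  qed
  then have "lt (bs x) (bs y)" using total bx(3) yb(3) ne by blast
  then have "lt (itr (bs x) (ix x)) (itr (bs y) (ix y))" using base_cmp bx(1) yb(1) by blast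
  then show ?thesis using bx(2) yb(2) by simp
qed

lemma ni_base:
  assumes y: "y \<in> NI" and y': "y' \<in> NI"
  shows "bs y = bs y'"
proof (rule ccontr)
  assume ne: "bs y \<noteq> bs y'"
  have yF: "y \<in> F" "\<not> ib y" using y unfolding NI_def by auto
  have y'F: "y' \<in> F" "\<not> ib y'" using y' unfolding NI_def by auto
  have yb: "isbase (bs y)" "bs y \<in> Field bigW" using bsF[OF yF(1)] by auto
  have y'b: "isbase (bs y')" "bs y' \<in> Field bigW" using bsF[OF y'F(1)] by auto
  have "lt (bs y) (bs y') \<or> lt (bs y') (bs y)" using total yb(2) y'b(2) ne by blast
  then show False
  proof
    assume "lt (bs y) (bs y')"
    then have "\<forall>k. itr (bs y) k \<in> F" using low_base_ib[OF yb(1) y'b(1) _ y'F(1) base_le[OF y'F(1)]] by blast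
    then show False using yF(2) unfolding ib_def by blast
  next
    assume "lt (bs y') (bs y)"
    then have "\<forall>k. itr (bs y') k \<in> F" using low_base_ib[OF y'b(1) yb(1) _ yF(1) base_le[OF yF(1)]] by blast
    then show False using y'F(2) unfolding ib_def by blast
  qed
qed

definition y0 where "y0 = (SOME y. y \<in> NI)"
definition b0 where "b0 = bs y0"
definition K0 where "K0 = (if NI = {} then 0 else (LEAST k. itr b0 k \<notin> F))"

lemma NI_facts:
  assumes ne: "NI \<noteq> {}"
  shows "isbase b0" "itr b0 K0 \<notin> F" "\<And>k. k < K0 \<Longrightarrow> itr b0 k \<in> F"
proof -
  have y0: "y0 \<in> NI" unfolding y0_def using ne some_in_eq by blast
  then have y0F: "y0 \<in> F" "\<not> ib y0" unfolding NI_def by auto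
  show "isbase b0" unfolding b0_def using bsF[OF y0F(1)] by blast
  have ex: "\<exists>k. itr b0 k \<notin> F" using y0F(2) unfolding ib_def b0_def by blast
  show "itr b0 K0 \<notin> F" unfolding K0_def using ne LeastI_ex[OF ex] by simp
  show "\<And>k. k < K0 \<Longrightarrow> itr b0 k \<in> F"
  proof -
    fix k assume "k < K0"
    then have "k < (LEAST k. itr b0 k \<notin> F)" unfolding K0_def using ne by simp
    then have "\<not> (itr b0 k \<notin> F)" by (rule not_less_Least)
    then show "itr b0 k \<in> F" by simp
  qed
qed

lemma NI_char:
  "y \<in> NI \<longleftrightarrow> (\<exists>k<K0. y = itr b0 k)"
proof (cases "NI = {}")
  case True then show ?thesis unfolding K0_def by simp
next
  case ne: False
  note fs = NI_facts[OF ne]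
  have b0F: "b0 \<in> Field bigW" using fs(1) unfolding isbase_def by blast
  show ?thesis
  proof
    assume y: "y \<in> NI"
    have y0: "y0 \<in> NI" unfolding y0_def using ne some_in_eq by blast
    have bb: "bs y = b0" unfolding b0_def using ni_base[OF y y0] .
    have yF: "y \<in> F" using y unfolding NI_def by auto
    have yi: "y = itr b0 (ix y)" using bsF[OF yF] bb by simp
    have "ix y < K0"
    proof (rule ccontr)
      assume "\<not> ix y < K0"
      then have "(itr b0 K0, itr b0 (ix y)) \<in> bigW" using itr_le[OF b0F] by simp
      then have "itr b0 K0 \<in> F" using F_down yF yi by metis
      then show False using fs(2) by simp
    qed
    then show "\<exists>k<K0. y = itr b0 k" using yi by blast
  next
    assume "\<exists>k<K0. y = itr b0 k"
    then obtain k where k: "k < K0" "y = itr b0 k" by blast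
    have "y \<in> F" using fs(3) k by simp
    moreover have "bs y = b0" using bs_itr[OF fs(1)] k(2) by simp
    then have "\<not> ib y" unfolding ib_def
    proof -
      assume e: "bs y = b0"
      show "\<not> (\<forall>k. itr (bs y) k \<in> F)"
      proof
        assume "\<forall>k. itr (bs y) k \<in> F"
        then have "itr b0 K0 \<in> F" using e by simp
        then show False using fs(2) by simp
      qed
    qed
    ultimately show "y \<in> NI" unfolding NI_def by blast
  qed
qed

definition Mb where "Mb = Suc (\<Sum>k<K0. wd (itr b0 k))"
definition mm where "mm = Mb ^ K0"
definition cI where "cI S = (\<Sum>k<K0. cnt S (itr b0 k) * Mb ^ k)"

lemma digit_lt: "finite S \<Longrightarrow> S \<subseteq> A \<Longrightarrow> k < K0 \<Longrightarrow> cnt S (itr b0 k) < Mb"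
proof -
  assume S: "finite S" "S \<subseteq> A" and k: "k < K0"
  have "cnt S (itr b0 k) \<le> wd (itr b0 k)" using cnt_le_wd S by blast
  also have "\<dots> \<le> (\<Sum>k<K0. wd (itr b0 k))" using k by (intro member_le_sum) auto
  finally show ?thesis unfolding Mb_def by simp
qed

lemma cI_lt: "finite S \<Longrightarrow> S \<subseteq> A \<Longrightarrow> cI S < mm"
  unfolding cI_def mm_def by (rule digits_bound) (use digit_lt in blast)

lemma cI_less:
  assumes S: "finite S" "S \<subseteq> A" and S': "finite S'" "S' \<subseteq> A"
    and \<beta>: "\<beta> \<in> NI" "cnt S' \<beta> < cnt S \<beta>" "\<forall>\<gamma>. (\<beta>, \<gamma>) \<in> bigW \<longrightarrow> \<beta> \<noteq> \<gamma> \<longrightarrow> cnt S' \<gamma> = cnt S \<gamma>"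
  shows "cI S' < cI S"
proof -
  have ne: "NI \<noteq> {}" using \<beta>(1) by blast
  have b0F: "b0 \<in> Field bigW" using NI_facts(1)[OF ne] unfolding isbase_def by blast
  obtain n where n: "n < K0" "\<beta> = itr b0 n" using \<beta>(1) NI_char by blast
  show ?thesis unfolding cI_def
  proof (rule digits_less[where n = n])
    show "\<forall>k<K0. cnt S (itr b0 k) < Mb" "\<forall>k<K0. cnt S' (itr b0 k) < Mb" using digit_lt S S' by auto
    show "n < K0" by fact
    show "cnt S' (itr b0 n) < cnt S (itr b0 n)" using \<beta>(2) n by simp
    show "\<forall>k. n < k \<longrightarrow> k < K0 \<longrightarrow> cnt S' (itr b0 k) = cnt S (itr b0 k)"
    proof (intro allI impI)
      fix k assume "n < k" "k < K0"
      then have "lt (itr b0 n) (itr b0 k)" using itr_mono[OF b0F] by blast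
      then show "cnt S' (itr b0 k) = cnt S (itr b0 k)" using \<beta>(3) n by blast
    qed
  qed
qed

lemma cI_eq:
  assumes \<beta>: "\<beta> \<in> F" "ib \<beta>" "\<forall>\<gamma>. (\<beta>, \<gamma>) \<in> bigW \<longrightarrow> \<beta> \<noteq> \<gamma> \<longrightarrow> cnt S' \<gamma> = cnt S \<gamma>"
  shows "cI S' = cI S"
  unfolding cI_def
proof (rule sum.cong[OF refl])
  fix k assume "k \<in> {..<K0}"
  then have "itr b0 k \<in> NI" using NI_char by blast
  then have "lt \<beta> (itr b0 k)" using ni_above \<beta>(1,2) by blast
  then show "cnt S' (itr b0 k) * Mb ^ k = cnt S (itr b0 k) * Mb ^ k" using \<beta>(3) by simp
qed

lemma code_less:
  assumes S: "finite S" "S \<subseteq> A" and S': "finite S'" "S' \<subseteq> A"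
    and h1: "hoare le S' S" and h2: "\<not> hoare le S S'"
  shows "((cI S', X S'), (cI S, X S)) \<in> times_nat (two_pow (height A le)) mm \<and> (cI S', X S') \<noteq> (cI S, X S)"
proof -
  obtain \<beta> where \<beta>: "\<beta> \<in> F" "cnt S' \<beta> < cnt S \<beta>" "\<forall>\<gamma>. (\<beta>, \<gamma>) \<in> bigW \<longrightarrow> \<beta> \<noteq> \<gamma> \<longrightarrow> cnt S' \<gamma> = cnt S \<gamma>"
    using cnt_less[OF S S' h1 h2] by blast
  have fld: "X S \<in> Field (two_pow (height A le))" "X S' \<in> Field (two_pow (height A le))"
    using X_Field S S' by auto
  have m: "cI S < mm" "cI S' < mm" using cI_lt S S' by auto
  show ?thesis
  proof (cases "ib \<beta>")
    case True
    have "cI S' = cI S" using cI_eq \<beta>(1,3) True by blast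
    moreover have "(X S', X S) \<in> two_pow (height A le) \<and> X S' \<noteq> X S"
      using X_less[OF S S' \<beta>(1) True \<beta>(2,3)] .
    ultimately show ?thesis using m fld unfolding times_nat_def by auto
  next
    case False
    then have "\<beta> \<in> NI" using \<beta>(1) unfolding NI_def by blast
    then have "cI S' < cI S" using cI_less[OF S S' _ \<beta>(2,3)] by blast
    then show ?thesis using m fld unfolding times_nat_def by auto
  qed
qed

lemma code_less_lim:
  assumes S: "finite S" "S \<subseteq> A" and S': "finite S'" "S' \<subseteq> A"
    and h1: "hoare le S' S" and h2: "\<not> hoare le S S'" and lim: "NI = {}"
  shows "(X S', X S) \<in> two_pow (height A le) \<and> X S' \<noteq> X S"
proof -
  obtain \<beta> where \<beta>: "\<beta> \<in> F" "cnt S' \<beta> < cnt S \<beta>" "\<forall>\<gamma>. (\<beta>, \<gamma>) \<in> bigW \<longrightarrow> \<beta> \<noteq> \<gamma> \<longrightarrow> cnt S' \<gamma> = cnt S \<gamma>"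
    using cnt_less[OF S S' h1 h2] by blast
  have "ib \<beta>" using \<beta>(1) lim unfolding NI_def by blast
  then show ?thesis using X_less[OF S S' \<beta>(1) _ \<beta>(2,3)] by blast
qed

lemma limit_NI:
  assumes lim: "is_limit_ord (height A le)"
  shows "NI = {}"
proof (rule ccontr)
  assume "NI \<noteq> {}"
  then obtain y where y: "y \<in> NI" by blast
  have yF: "y \<in> F" "\<not> ib y" using y unfolding NI_def by auto
  have yb: "isbase (bs y)" "bs y \<in> Field bigW" using bsF[OF yF(1)] by auto
  have ex: "\<exists>k. itr (bs y) k \<notin> F" using yF(2) unfolding ib_def by blast
  define k1 where "k1 = (LEAST k. itr (bs y) k \<notin> F)"
  have k1: "itr (bs y) k1 \<notin> F" unfolding k1_def using LeastI_ex[OF ex] .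
  have k1': "itr (bs y) k \<in> F" if "k < k1" for k
  proof -
    have "\<not> (itr (bs y) k \<notin> F)" using that unfolding k1_def by (rule not_less_Least)
    then show ?thesis by simp
  qed
  have "bs y \<in> F" using F_down[OF yF(1) base_le[OF yF(1)]] .
  then have "k1 \<noteq> 0" using k1 by (cases k1) auto
  then obtain k where kk: "k1 = Suc k" by (cases k1) auto
  define x where "x = itr (bs y) k"
  have xF: "x \<in> F" unfolding x_def using k1' kk by simp
  have nx: "nxt x \<notin> F" using k1 kk unfolding x_def by (simp add: itr_Suc)
  have mx: "(b, x) \<in> bigW" if b: "b \<in> F" for b
  proof (rule ccontr)
    assume "(b, x) \<notin> bigW"
    then have "lt x b" using not_lt[of b x] F_Field b xF by blast
    then have "(nxt x, b) \<in> bigW" by (rule nxt_least)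
    then have "nxt x \<in> F" using F_down b by blast
    then show False using nx by simp
  qed
  have "is_successor_ord (height A le)"
    unfolding is_successor_ord_def Field_H using xF mx H_eq by auto
  then show False using lim unfolding is_limit_ord_def by simp
qed

end



context WQ
begin

abbreviation P where "P \<equiv> Dec (Pf A) (hoare le)"

lemma hoare_refl: "S \<subseteq> A \<Longrightarrow> hoare le S S"
  unfolding hoare_def using lrefl by blast

lemma wfP: "wf (tree_child P)"
proof (rule Dec_wf)
  fix S :: "nat \<Rightarrow> 'a set" assume SA: "\<forall>i. S i \<in> Pf A"
  show "\<not> (\<forall>i j. i < j \<longrightarrow> strict (hoare le) (S j) (S i))"
  proof
    assume st: "\<forall>i j. i < j \<longrightarrow> strict (hoare le) (S j) (S i)"
    have SAi: "S i \<subseteq> A" for i using SA unfolding Pf_def by blast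
    have "\<forall>i. \<exists>x. x \<in> S i \<and> (\<forall>y\<in>S (Suc i). \<not> le x y)"
    proof
      fix i
      have "\<not> hoare le (S i) (S (Suc i))" using st unfolding strict_def by auto
      then show "\<exists>x. x \<in> S i \<and> (\<forall>y\<in>S (Suc i). \<not> le x y)" unfolding hoare_def by blast
    qed
    then have "\<exists>x. \<forall>i. x i \<in> S i \<and> (\<forall>y\<in>S (Suc i). \<not> le (x i) y)" by (rule choice)
    then obtain x where x: "\<forall>i. x i \<in> S i \<and> (\<forall>y\<in>S (Suc i). \<not> le (x i) y)" by (elim exE)
    have xA: "x i \<in> A" for i using x SAi by blast
    obtain i j where ij: "i < j" "le (x i) (x j)" using good[of x] xA by blast
    have "hoare le (S j) (S (Suc i))"
    proof (cases "j = Suc i")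
      case True then show ?thesis using hoare_refl SAi by simp
    next
      case False
      then have "Suc i < j" using ij by simp
      then show ?thesis using st unfolding strict_def by blast
    qed
    then obtain y where y: "y \<in> S (Suc i)" "le (x j) y" using x unfolding hoare_def by blast
    have "le (x i) y" using trans[OF xA xA _ ij(2) y(2)] y(1) SAi by blast
    then show False using x y(1) by blast
  qed
qed

lemma pcP: "pclosed P" by (rule Dec_pclosed)
lemma rootP: "[] \<in> P" by (rule Dec_nil)

definition ms :: "'a list \<Rightarrow> 'a set list" where "ms t = map (\<lambda>a. {a}) t"

lemma ms_P: "t \<in> D \<Longrightarrow> ms t \<in> P"
proof -
  assume t: "t \<in> D"
  have "set (ms t) \<subseteq> Pf A" using t unfolding ms_def Dec_iff Pf_def by auto
  moreover have "sorted_wrt (\<lambda>x y. strict (hoare le) y x) (ms t)"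
  proof -
    have "sorted_wrt (\<lambda>x y. strict le y x) t" using t unfolding Dec_iff by blast
    then have "sorted_wrt (\<lambda>x y. strict (hoare le) {y} {x}) t"
      by (rule sorted_wrt_mono_rel[rotated]) (simp add: strict_def hoare_def)
    then show ?thesis unfolding ms_def by (simp add: sorted_wrt_map)
  qed
  ultimately show ?thesis unfolding Dec_iff by blast
qed

lemma not_below_empty: "\<not> strict (hoare le) S {}"
  unfolding strict_def hoare_def by auto

lemma P_after_empty: "xs @ [{}] @ w \<in> P \<Longrightarrow> w = []"
proof (rule ccontr)
  assume h: "xs @ [{}] @ w \<in> P" "w \<noteq> []"
  then obtain z w' where "w = z # w'" by (cases w) auto
  then have "strict (hoare le) z {}" using h(1) unfolding Dec_iff by (auto simp: sorted_wrt_append)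
  then show False using not_below_empty by blast
qed

lemma ms_empty_P:
  assumes t: "t \<in> D"
  shows "ms t @ [{}] \<in> P"
proof -
  have "ms t \<in> P" using ms_P t by blast
  moreover have "\<forall>x\<in>set (ms t). strict (hoare le) {} x" unfolding ms_def strict_def hoare_def by auto
  moreover have "{} \<in> Pf A" unfolding Pf_def by auto
  ultimately show ?thesis unfolding Dec_iff by (auto simp: sorted_wrt_append)
qed

lemma rk_empty_end:
  assumes "xs @ [{}] \<in> P"
  shows "rk P (xs @ [{}]) = rk P [{}]"
proof (rule rank_subtree[OF wfP], intro allI)
  fix w
  have e: "[{}] \<in> P" using assms unfolding Dec_iff by auto
  show "(xs @ [{}]) @ w \<in> P \<longleftrightarrow> [{}] @ w \<in> P"
  proof
    assume "(xs @ [{}]) @ w \<in> P"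
    then have "w = []" using P_after_empty[of xs w] by simp
    then show "[{}] @ w \<in> P" using e by simp
  next
    assume "[{}] @ w \<in> P"
    then have "w = []" using P_after_empty[of "[]" w] by simp
    then show "(xs @ [{}]) @ w \<in> P" using assms by simp
  qed
qed

lemma lower_bound: "(one_plus (height A le), height (Pf A) (hoare le)) \<in> ordLeq"
proof -
  let ?W = "bigW :: 'a set list set rel"
  define g where "g t = rk P (ms t)" for t
  have gF: "g t \<in> Field ?W" for t unfolding g_def by (rule rank_inField[OF wfP])
  have gM: "(g (t @ u), g t) \<in> ?W \<and> g (t @ u) \<noteq> g t"
    if "t \<in> D" "t \<noteq> []" "t @ u \<in> D" "u \<noteq> []" for t u
  proof -
    have "ms t @ ms u \<in> P" using ms_P[OF that(3)] unfolding ms_def by simp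
    moreover have "ms u \<noteq> []" using that(4) unfolding ms_def by simp
    ultimately have "(rk P (ms t @ ms u), rk P (ms t)) \<in> ?W \<and> rk P (ms t @ ms u) \<noteq> rk P (ms t)"
      by (rule rank_desc_less[OF wfP pcP])
    then show ?thesis unfolding g_def ms_def by simp
  qed
  have ex: "\<exists>f. (\<forall>y\<in>Field (tree_height D). f y \<in> g ` {t \<in> D. t \<noteq> [] \<and> rk D t = y}) \<and>
    (\<forall>y y'. y \<in> Field (tree_height D) \<longrightarrow> y' \<in> Field (tree_height D) \<longrightarrow> (y,y') \<in> bigW \<longrightarrow> y \<noteq> y' \<longrightarrow>
       (f y, f y') \<in> ?W \<and> f y \<noteq> f y')"
  proof (rule tree_mono[OF wfD Dec_pclosed Dec_nil bigW_WO])
    show "\<And>t. t \<in> D \<Longrightarrow> t \<noteq> [] \<Longrightarrow> g t \<in> Field ?W" using gF by blast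
    show "\<And>t u. t \<in> D \<Longrightarrow> t \<noteq> [] \<Longrightarrow> t @ u \<in> D \<Longrightarrow> u \<noteq> [] \<Longrightarrow> (g (t @ u), g t) \<in> ?W \<and> g (t @ u) \<noteq> g t"
      by (rule gM)
  qed
  then obtain f where f1: "\<forall>y\<in>Field (tree_height D). f y \<in> g ` {t \<in> D. t \<noteq> [] \<and> rk D t = y}"
    and f2: "\<forall>y y'. y \<in> Field (tree_height D) \<longrightarrow> y' \<in> Field (tree_height D) \<longrightarrow> (y,y') \<in> bigW \<longrightarrow> y \<noteq> y' \<longrightarrow>
       (f y, f y') \<in> ?W \<and> f y \<noteq> f y'" by blast
  have hD: "height A le = tree_height D" unfolding height_def by simp
  define \<phi> where "\<phi> x = (case x of None \<Rightarrow> rk P [{}] | Some y \<Rightarrow> f y)" for x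
  have e: "[] @ [{}] \<in> P" "[] \<in> P" unfolding Dec_iff Pf_def by auto
  have Ne: "(rk P [{}], rk P []) \<in> ?W \<and> rk P [{}] \<noteq> rk P []"
    using rank_child_less[OF wfP ch_mem[OF e(2,1)]] by simp
  have fy: "\<exists>t. t \<in> D \<and> t \<noteq> [] \<and> f y = g t" if "y \<in> Field (tree_height D)" for y
    using f1 that by blast
  have Nf: "(rk P [{}], f y) \<in> ?W \<and> rk P [{}] \<noteq> f y" if yF: "y \<in> Field (tree_height D)" for y
  proof -
    obtain t where t: "t \<in> D" "t \<noteq> []" "f y = g t" using fy[OF yF] by blast
    have "ms t @ [{}] \<in> P" by (rule ms_empty_P[OF t(1)])
    then have "(rk P (ms t @ [{}]), rk P (ms t)) \<in> ?W \<and> rk P (ms t @ [{}]) \<noteq> rk P (ms t)"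
      by (rule rank_desc_less[OF wfP pcP]) simp
    moreover have "rk P (ms t @ [{}]) = rk P [{}]" by (rule rk_empty_end) fact
    ultimately show ?thesis using t(3) unfolding g_def by simp
  qed
  have fF: "(f y, rk P []) \<in> ?W \<and> f y \<noteq> rk P []" if yF: "y \<in> Field (tree_height D)" for y
  proof -
    obtain t where t: "t \<in> D" "t \<noteq> []" "f y = g t" using fy[OF yF] by blast
    have "[] @ ms t \<in> P" using ms_P[OF t(1)] by simp
    moreover have "ms t \<noteq> []" using t(2) unfolding ms_def by simp
    ultimately have "(rk P ([] @ ms t), rk P []) \<in> ?W \<and> rk P ([] @ ms t) \<noteq> rk P []"
      by (rule rank_desc_less[OF wfP pcP])
    then show ?thesis using t(3) unfolding g_def by simp
  qed
  have FP: "Field (height (Pf A) (hoare le)) = underS ?W (rk P [])"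
    unfolding height_def by (rule Field_tree_height)
  have HP: "height (Pf A) (hoare le) = Restr ?W (underS ?W (rk P []))"
    unfolding height_def tree_height_def by simp
  have phiF: "\<phi> x \<in> Field (height (Pf A) (hoare le))" if xF: "x \<in> Field (one_plus (height A le))" for x
  proof (cases x)
    case None then show ?thesis using Ne FP unfolding \<phi>_def underS_def by simp
  next
    case (Some y)
    then have "y \<in> Field (tree_height D)" using xF Field_one_plus[OF H_WO] hD by auto
    then show ?thesis using fF FP Some unfolding \<phi>_def underS_def by simp
  qed
  have phiM: "(\<phi> x, \<phi> y) \<in> ?W \<and> \<phi> x \<noteq> \<phi> y" if xy: "(x, y) \<in> one_plus (height A le)" "x \<noteq> y" for x y
  proof (cases x)
    case None
    then obtain b where b: "y = Some b" "b \<in> Field (height A le)" using xy unfolding one_plus_def by auto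
    then show ?thesis using Nf hD None unfolding \<phi>_def by simp
  next
    case (Some a)
    then obtain b where b: "y = Some b" "(a, b) \<in> height A le" using xy unfolding one_plus_def by auto
    have "a \<in> Field (tree_height D)" "b \<in> Field (tree_height D)"
      using FieldI1[OF b(2)] FieldI2[OF b(2)] hD by auto
    moreover have "(a, b) \<in> bigW" using b(2) H_eq by auto
    moreover have "a \<noteq> b" using xy Some b by auto
    ultimately show ?thesis using f2 Some b unfolding \<phi>_def by simp
  qed
  show ?thesis
  proof (rule mono_ordLeq[OF one_plus_WO[OF H_WO]])
    show "Well_order (height (Pf A) (hoare le))" unfolding height_def by (rule tree_height_WO)
    show "\<phi> x \<in> Field (height (Pf A) (hoare le))" if "x \<in> Field (one_plus (height A le))" for x
      using phiF that .
    show "(\<phi> x, \<phi> y) \<in> height (Pf A) (hoare le) \<and> \<phi> x \<noteq> \<phi> y"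
      if xy: "(x, y) \<in> one_plus (height A le)" "x \<noteq> y" for x y
    proof -
      have "x \<in> Field (one_plus (height A le))" "y \<in> Field (one_plus (height A le))"
        using FieldI1[OF xy(1)] FieldI2[OF xy(1)] .
      then have "\<phi> x \<in> underS ?W (rk P [])" "\<phi> y \<in> underS ?W (rk P [])" using phiF FP by auto
      then show ?thesis using phiM[OF xy] HP by simp
    qed
  qed
qed

lemma last_P: "t \<in> P \<Longrightarrow> t \<noteq> [] \<Longrightarrow> finite (last t) \<and> last t \<subseteq> A"
proof -
  assume "t \<in> P" "t \<noteq> []"
  then have "last t \<in> Pf A" unfolding Dec_iff by auto
  then show ?thesis unfolding Pf_def by auto
qed

lemma last_strict: "t \<in> P \<Longrightarrow> t \<noteq> [] \<Longrightarrow> t @ u \<in> P \<Longrightarrow> u \<noteq> [] \<Longrightarrow>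
    hoare le (last (t @ u)) (last t) \<and> \<not> hoare le (last t) (last (t @ u))"
proof -
  assume h: "t \<in> P" "t \<noteq> []" "t @ u \<in> P" "u \<noteq> []"
  have "\<forall>x\<in>set t. \<forall>y\<in>set u. strict (hoare le) y x" using h(3) unfolding Dec_iff by (auto simp: sorted_wrt_append)
  moreover have "last t \<in> set t" "last u \<in> set u" using h by auto
  ultimately have "strict (hoare le) (last u) (last t)" by blast
  then show ?thesis using h(4) unfolding strict_def by simp
qed

lemma upper_bound: "(height (Pf A) (hoare le), times_nat (two_pow (height A le)) mm) \<in> ordLeq"
  unfolding height_def[of "Pf A"]
proof (rule tree_height_le[OF wfP pcP rootP times_nat_WO[OF two_pow_WO[OF H_WO]]])
  show "(\<lambda>t. (cI (last t), X (last t))) t \<in> Field (times_nat (two_pow (height A le)) mm)"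
    if "t \<in> P" "t \<noteq> []" for t
    using last_P[OF that] cI_lt X_Field Field_times_nat[OF two_pow_WO[OF H_WO]] by simp
  show "((\<lambda>t. (cI (last t), X (last t))) (t @ u), (\<lambda>t. (cI (last t), X (last t))) t) \<in> times_nat (two_pow (height A le)) mm \<and>
     (\<lambda>t. (cI (last t), X (last t))) (t @ u) \<noteq> (\<lambda>t. (cI (last t), X (last t))) t"
    if "t \<in> P" "t \<noteq> []" "t @ u \<in> P" "u \<noteq> []" for t u
  proof -
    have "t @ u \<noteq> []" using that(2) by simp
    then have "finite (last t) \<and> last t \<subseteq> A" "finite (last (t @ u)) \<and> last (t @ u) \<subseteq> A"
      using last_P[OF that(1,2)] last_P[OF that(3)] by blast+
    then show ?thesis using code_less last_strict[OF that] by simp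
  qed
qed

lemma upper_bound_lim:
  assumes lim: "is_limit_ord (height A le)"
  shows "(height (Pf A) (hoare le), two_pow (height A le)) \<in> ordLeq"
  unfolding height_def[of "Pf A"]
proof (rule tree_height_le[OF wfP pcP rootP two_pow_WO[OF H_WO]])
  have NI: "NI = {}" using limit_NI[OF lim] .
  show "(\<lambda>t. X (last t)) t \<in> Field (two_pow (height A le))"
    if "t \<in> P" "t \<noteq> []" for t
    using last_P[OF that] X_Field by simp
  show "((\<lambda>t. X (last t)) (t @ u), (\<lambda>t. X (last t)) t) \<in> two_pow (height A le) \<and>
     (\<lambda>t. X (last t)) (t @ u) \<noteq> (\<lambda>t. X (last t)) t"
    if "t \<in> P" "t \<noteq> []" "t @ u \<in> P" "u \<noteq> []" for t u
  proof -
    have "t @ u \<noteq> []" using that(2) by simp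
    then have "finite (last t) \<and> last t \<subseteq> A" "finite (last (t @ u)) \<and> last (t @ u) \<subseteq> A"
      using last_P[OF that(1,2)] last_P[OF that(3)] by blast+
    then show ?thesis using code_less_lim last_strict[OF that] NI by simp
  qed
qed

end

theorem mainTheorem2:
  fixes A :: "'a set" and le :: "'a \<Rightarrow> 'a \<Rightarrow> bool"
  assumes "wqo_on A le"
  shows "\<exists>m :: nat.
     (one_plus (height A le), height (Pf A) (hoare le)) \<in> ordLeq \<and>
     (is_limit_ord (height A le) \<longrightarrow> (height (Pf A) (hoare le), two_pow (height A le)) \<in> ordLeq) \<and>
     (is_successor_ord (height A le) \<longrightarrow>
        (height (Pf A) (hoare le), times_nat (two_pow (height A le)) m) \<in> ordLeq)"
proof -
  interpret WQ A le by (rule WQ.intro[OF assms])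
  show ?thesis using lower_bound upper_bound upper_bound_lim by blast
qed



end
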